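(* Let $\alpha$ be a cylindric partition on $\mathcal C_{k,n}$ and $m$ a nonnegative integer. Let $M$ be the set of cylindric partitions $\mu\subseteq\alpha$ such that $\alpha/\mu$ contains exactly $m$ boxes, and $\Lambda$ the set of cylindric partitions $\lambda\supseteq\alpha$ such that $\lambda/\alpha$ contains exactly $m$ boxes. Then \[ \sum_{\mu\in M}f_{\alpha/\mu}=\sum_{\lambda\in\Lambda}f_{\lambda/\alpha}. \]
   Context: Fix integers $n>k\ge1$. A cylindric partition is a weakly decreasing integer sequence $(\lambda_m)_{m\in\mathbb Z}$ with $\lambda_m=\lambda_{m+k}+n-k$. A point $(x,y)\in\mathbb Z^2$ lies in $\lambda$ if $y\le\lambda_x$. Boxes are classes of points modulo translation by multiples of $(-k,n-k)$; $\pi$ the projection; a box lies in $\lambda$ iff its representatives do. $\mu\subseteq\lambda$ means $\mu_m\le\lambda_m$ for all $m$; boxes of $\lambda/\mu$ are boxes in $\lambda$ not in $\mu$. A semistandard cylindric tableau of shape $\lambda/\mu$ with values in a totally ordered set is a map $R$ from boxes of $\lambda/\mu$ to it with $R(\pi(x,y_1))\le R(\pi(x,y_2))$ whenever $(x,y_1),(x,y_2)$ lie in $\lambda$ but not $\mu$ and $y_1<y_2$, and $R(\pi(x_1,y))<R(\pi(x_2,y))$ whenever $(x_1,y),(x_2,y)$ lie in $\lambda$ but not $\mu$ and $x_1<x_2$. A standard cylindric tableau takes values in $\{1,\dots,N\}$ for some $N\ge0$ with each value used exactly once; $f_{\lambda/\mu}$ is the number of standard cylindric tableaux of shape $\lambda/\mu$.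 *)

theory Defs
  imports Main
begin

definition cylindric :: "nat \<Rightarrow> nat \<Rightarrow> (int \<Rightarrow> int) \<Rightarrow> bool" where
  "cylindric k n lam \<longleftrightarrow>
     (\<forall>a b. a \<le> b \<longrightarrow> lam b \<le> lam a) \<and>
     (\<forall>m. lam m = lam (m + int k) + (int n - int k))"

definition in_part :: "(int \<Rightarrow> int) \<Rightarrow> int \<times> int \<Rightarrow> bool" where
  "in_part lam p \<longleftrightarrow> snd p \<le> lam (fst p)"

text \<open>The box containing a point: its class modulo translation by multiples of (-k, n-k).\<close>
definition box_of :: "nat \<Rightarrow> nat \<Rightarrow> int \<times> int \<Rightarrow> (int \<times> int) set" where
  "box_of k n p = {(fst p - t * int k, snd p + t * (int n - int k)) | t. True}"

definition subpart :: "(int \<Rightarrow> int) \<Rightarrow> (int \<Rightarrow> int) \<Rightarrow> bool" where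
  "subpart mu lam \<longleftrightarrow> (\<forall>m. mu m \<le> lam m)"

definition skew_boxes :: "nat \<Rightarrow> nat \<Rightarrow> (int \<Rightarrow> int) \<Rightarrow> (int \<Rightarrow> int) \<Rightarrow> (int \<times> int) set set" where
  "skew_boxes k n lam mu = {box_of k n p | p. in_part lam p \<and> \<not> in_part mu p}"

definition semistandard :: "nat \<Rightarrow> nat \<Rightarrow> (int \<Rightarrow> int) \<Rightarrow> (int \<Rightarrow> int)
    \<Rightarrow> ((int \<times> int) set \<Rightarrow> 'a::linorder) \<Rightarrow> bool" where
  "semistandard k n lam mu R \<longleftrightarrow>
     (\<forall>x y1 y2. in_part lam (x, y1) \<and> \<not> in_part mu (x, y1) \<and>
                in_part lam (x, y2) \<and> \<not> in_part mu (x, y2) \<and> y1 < y2 \<longrightarrow>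
                R (box_of k n (x, y1)) \<le> R (box_of k n (x, y2))) \<and>
     (\<forall>x1 x2 y. in_part lam (x1, y) \<and> \<not> in_part mu (x1, y) \<and>
                in_part lam (x2, y) \<and> \<not> in_part mu (x2, y) \<and> x1 < x2 \<longrightarrow>
                R (box_of k n (x1, y)) < R (box_of k n (x2, y)))"

text \<open>Standard tableaux: bijections from the boxes onto {1..N} (N is then the number of
 boxes), semistandard; maps are normalised to 0 off the boxes so they can be counted.\<close>
definition standard_tableaux :: "nat \<Rightarrow> nat \<Rightarrow> (int \<Rightarrow> int) \<Rightarrow> (int \<Rightarrow> int)
    \<Rightarrow> ((int \<times> int) set \<Rightarrow> nat) set" where
  "standard_tableaux k n lam mu =
     {R. (\<exists>N. bij_betw R (skew_boxes k n lam mu) {1..N}) \<and>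
         (\<forall>b. b \<notin> skew_boxes k n lam mu \<longrightarrow> R b = 0) \<and>
         semistandard k n lam mu R}"

definition num_standard :: "nat \<Rightarrow> nat \<Rightarrow> (int \<Rightarrow> int) \<Rightarrow> (int \<Rightarrow> int) \<Rightarrow> nat" where
  "num_standard k n lam mu = card (standard_tableaux k n lam mu)"

end

theory Submission imports Defs begin

definition LE :: "('b \<Rightarrow> 'b \<Rightarrow> bool) \<Rightarrow> 'b set \<Rightarrow> ('b \<Rightarrow> nat) set" where
  "LE g S = {R. (\<exists>N. bij_betw R S {1..N}) \<and> (\<forall>b. b \<notin> S \<longrightarrow> R b = 0) \<and>
                (\<forall>b\<in>S. \<forall>c\<in>S. g b c \<longrightarrow> R b < R c)}"

lemma LE_bij: "finite S \<Longrightarrow> R \<in> LE g S \<Longrightarrow> bij_betw R S {1..card S}"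
  unfolding LE_def using bij_betw_same_card by fastforce

lemma finite_LE:
  assumes "finite S" shows "finite (LE g S)"
proof -
  have "LE g S \<subseteq> {R. \<forall>x. (x \<in> S \<longrightarrow> R x \<in> {0..card S}) \<and> (x \<notin> S \<longrightarrow> R x = 0)}"
  proof
    fix R assume R: "R \<in> LE g S"
    then have "bij_betw R S {1..card S}" using LE_bij assms by blast
    then have "\<And>x. x \<in> S \<Longrightarrow> R x \<in> {0..card S}" unfolding bij_betw_def by auto
    then show "R \<in> {R. \<forall>x. (x \<in> S \<longrightarrow> R x \<in> {0..card S}) \<and> (x \<notin> S \<longrightarrow> R x = 0)}"
      using R unfolding LE_def by blast
  qed
  moreover have "finite {R. \<forall>x. (x \<in> S \<longrightarrow> R x \<in> {0..card S}) \<and> (x \<notin> S \<longrightarrow> R x = 0)}"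
    by (rule finite_set_of_finite_funs[OF assms]) simp
  ultimately show ?thesis by (rule finite_subset)
qed

lemma LE_empty: "LE g {} = {\<lambda>_. 0}"
proof -
  have "bij_betw (\<lambda>_. 0::nat) {} {1..0}" by (simp add: bij_betw_def)
  then show ?thesis unfolding LE_def by (auto simp: bij_betw_def)
qed

lemma LE_max:
  assumes fin: "finite S" and ne: "S \<noteq> {}"
  shows "card (LE g S) = (\<Sum>b\<in>{b\<in>S. \<forall>c\<in>S. \<not> g b c}. card (LE g (S - {b})))"
proof -
  define N where "N = card S"
  have N1: "N \<ge> 1" using fin ne N_def by (simp add: Suc_leI card_gt_0_iff)
  define Mx where "Mx = {b\<in>S. \<forall>c\<in>S. \<not> g b c}"
  define P where "P b = {R\<in>LE g S. R b = N}" for b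
  have cover: "LE g S = (\<Union>b\<in>Mx. P b)"
  proof
    show "LE g S \<subseteq> (\<Union>b\<in>Mx. P b)"
    proof
      fix R assume R: "R \<in> LE g S"
      have bij: "bij_betw R S {1..N}" using LE_bij[OF fin R] N_def by simp
      then have "N \<in> R ` S" using N1 unfolding bij_betw_def by auto
      then obtain b where b: "b \<in> S" "R b = N" by blast
      have "\<forall>c\<in>S. \<not> g b c"
      proof (intro ballI notI)
        fix c assume c: "c \<in> S" "g b c"
        then have "R b < R c" using R b unfolding LE_def by blast
        moreover have "R c \<le> N" using bij c unfolding bij_betw_def by auto
        ultimately show False using b by simp
      qed
      then show "R \<in> (\<Union>b\<in>Mx. P b)" using b R unfolding Mx_def P_def by blast
    qed
  qed (auto simp: P_def)
  have disj: "\<forall>b\<in>Mx. \<forall>b'\<in>Mx. b \<noteq> b' \<longrightarrow> P b \<inter> P b' = {}"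
  proof (intro ballI impI)
    fix b b' assume b: "b \<in> Mx" "b' \<in> Mx" "b \<noteq> b'"
    show "P b \<inter> P b' = {}"
    proof (rule ccontr)
      assume "P b \<inter> P b' \<noteq> {}"
      then obtain R where R: "R \<in> LE g S" "R b = N" "R b' = N" unfolding P_def by blast
      have "inj_on R S" using LE_bij[OF fin R(1)] unfolding bij_betw_def by blast
      then show False using b R unfolding Mx_def inj_on_def by auto
    qed
  qed
  have fP: "\<forall>b\<in>Mx. finite (P b)" using finite_LE[OF fin] unfolding P_def by auto
  have fMx: "finite Mx" using fin unfolding Mx_def by simp
  have cardP: "card (P b) = card (LE g (S - {b}))" if bM: "b \<in> Mx" for b
  proof -
    have bS: "b \<in> S" using bM unfolding Mx_def by blast
    have bmax: "\<And>c. c \<in> S \<Longrightarrow> \<not> g b c" using bM unfolding Mx_def by blast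
    have cS': "card (S - {b}) = N - 1" using bS fin N_def by simp
    show ?thesis
    proof (rule bij_betw_same_card[of "\<lambda>R. R(b := 0)"], rule bij_betw_byWitness[where f'="\<lambda>R. R(b := N)"])
      show "\<forall>R\<in>P b. (R(b := 0))(b := N) = R" unfolding P_def by auto
      show "\<forall>R\<in>LE g (S - {b}). (R(b := N))(b := 0) = R" unfolding LE_def by auto
      show "(\<lambda>R. R(b := 0)) ` P b \<subseteq> LE g (S - {b})"
      proof
        fix R' assume "R' \<in> (\<lambda>R. R(b := 0)) ` P b"
        then obtain R where R: "R \<in> LE g S" "R b = N" "R' = R(b := 0)" unfolding P_def by blast
        have bij: "bij_betw R S {1..N}" using LE_bij[OF fin R(1)] N_def by simp
        have "bij_betw R {b} {N}" using R(2) by (simp add: bij_betw_def)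
        then have "bij_betw R (S - {b}) ({1..N} - {N})"
          by (rule bij_betw_DiffI[OF bij]) (use bS N1 in auto)
        moreover have "{1..N} - {N} = {1..N - 1}" using N1 by auto
        ultimately have "bij_betw R (S - {b}) {1..N - 1}" by simp
        moreover have "bij_betw R' (S - {b}) {1..N - 1} = bij_betw R (S - {b}) {1..N - 1}"
          by (rule bij_betw_cong) (simp add: R(3))
        ultimately have "bij_betw R' (S - {b}) {1..N - 1}" by simp
        moreover have "\<forall>c. c \<notin> S - {b} \<longrightarrow> R' c = 0" using R unfolding LE_def by auto
        moreover have "\<forall>c\<in>S - {b}. \<forall>d\<in>S - {b}. g c d \<longrightarrow> R' c < R' d" using R unfolding LE_def by auto
        ultimately show "R' \<in> LE g (S - {b})" unfolding LE_def by blast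
      qed
      show "(\<lambda>R. R(b := N)) ` LE g (S - {b}) \<subseteq> P b"
      proof
        fix R assume "R \<in> (\<lambda>R. R(b := N)) ` LE g (S - {b})"
        then obtain R' where R': "R' \<in> LE g (S - {b})" "R = R'(b := N)" by blast
        have bij: "bij_betw R' (S - {b}) {1..N - 1}" using LE_bij[OF _ R'(1)] fin cS' by simp
        have "bij_betw R (S - {b}) {1..N - 1} = bij_betw R' (S - {b}) {1..N - 1}"
          by (rule bij_betw_cong) (simp add: R'(2))
        then have bij2: "bij_betw R (S - {b}) {1..N - 1}" using bij by simp
        have Rb: "R b = N" using R'(2) by simp
        have "bij_betw R ((S - {b}) \<union> {b}) ({1..N - 1} \<union> {R b})"
          by (rule notIn_Un_bij_betw[OF _ _ bij2]) (use Rb N1 in auto)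
        moreover have "(S - {b}) \<union> {b} = S" using bS by auto
        moreover have "{1..N - 1} \<union> {R b} = {1..N}" using N1 Rb by auto
        ultimately have "bij_betw R S {1..N}" by simp
        moreover have "\<forall>c. c \<notin> S \<longrightarrow> R c = 0" using R' bS unfolding LE_def by auto
        moreover have "\<forall>c\<in>S. \<forall>d\<in>S. g c d \<longrightarrow> R c < R d"
        proof (intro ballI impI)
          fix c d assume cd: "c \<in> S" "d \<in> S" "g c d"
          have "c \<noteq> b" using bmax cd by blast
          show "R c < R d"
          proof (cases "d = b")
            case True
            have "R' c \<in> {1..N - 1}" using bij cd \<open>c \<noteq> b\<close> unfolding bij_betw_def by auto
            then show ?thesis using True R'(2) \<open>c \<noteq> b\<close> N1 by auto
          next
            case False
            then show ?thesis using R' cd \<open>c \<noteq> b\<close> unfolding LE_def by auto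
          qed
        qed
        ultimately show "R \<in> P b" unfolding P_def LE_def using R'(2) by auto
      qed
    qed
  qed
  have "card (LE g S) = (\<Sum>b\<in>Mx. card (P b))"
    unfolding cover by (rule card_UN_disjoint[OF fMx fP disj])
  also have "\<dots> = (\<Sum>b\<in>Mx. card (LE g (S - {b})))" by (rule sum.cong) (auto simp: cardP)
  finally show ?thesis unfolding Mx_def .
qed

lemma LE_min:
  assumes fin: "finite S" and ne: "S \<noteq> {}"
  shows "card (LE g S) = (\<Sum>b\<in>{b\<in>S. \<forall>c\<in>S. \<not> g c b}. card (LE g (S - {b})))"
proof -
  define N where "N = card S"
  have N1: "N \<ge> 1" using fin ne N_def by (simp add: Suc_leI card_gt_0_iff)
  define Mn where "Mn = {b\<in>S. \<forall>c\<in>S. \<not> g c b}"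
  define P where "P b = {R\<in>LE g S. R b = 1}" for b
  have cover: "LE g S = (\<Union>b\<in>Mn. P b)"
  proof
    show "LE g S \<subseteq> (\<Union>b\<in>Mn. P b)"
    proof
      fix R assume R: "R \<in> LE g S"
      have bij: "bij_betw R S {1..N}" using LE_bij[OF fin R] N_def by simp
      then have "1 \<in> R ` S" using N1 unfolding bij_betw_def by auto
      then obtain b where b: "b \<in> S" "R b = 1" by (metis imageE)
      have "\<forall>c\<in>S. \<not> g c b"
      proof (intro ballI notI)
        fix c assume c: "c \<in> S" "g c b"
        then have "R c < R b" using R b unfolding LE_def by blast
        moreover have "R c \<ge> 1" using bij c unfolding bij_betw_def by auto
        ultimately show False using b by simp
      qed
      then show "R \<in> (\<Union>b\<in>Mn. P b)" using b R unfolding Mn_def P_def by blast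
    qed
  qed (auto simp: P_def)
  have disj: "\<forall>b\<in>Mn. \<forall>b'\<in>Mn. b \<noteq> b' \<longrightarrow> P b \<inter> P b' = {}"
  proof (intro ballI impI)
    fix b b' assume b: "b \<in> Mn" "b' \<in> Mn" "b \<noteq> b'"
    show "P b \<inter> P b' = {}"
    proof (rule ccontr)
      assume "P b \<inter> P b' \<noteq> {}"
      then obtain R where R: "R \<in> LE g S" "R b = 1" "R b' = 1" unfolding P_def by blast
      have "inj_on R S" using LE_bij[OF fin R(1)] unfolding bij_betw_def by blast
      then show False using b R unfolding Mn_def inj_on_def by auto
    qed
  qed
  have fP: "\<forall>b\<in>Mn. finite (P b)" using finite_LE[OF fin] unfolding P_def by auto
  have fMn: "finite Mn" using fin unfolding Mn_def by simp
  have cardP: "card (P b) = card (LE g (S - {b}))" if bM: "b \<in> Mn" for b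
  proof -
    have bS: "b \<in> S" using bM unfolding Mn_def by blast
    have bmin: "\<And>c. c \<in> S \<Longrightarrow> \<not> g c b" using bM unfolding Mn_def by blast
    have cS': "card (S - {b}) = N - 1" using bS fin N_def by simp
    show ?thesis
    proof (rule bij_betw_same_card[of "\<lambda>R c. R c - 1"],
        rule bij_betw_byWitness[where f'="\<lambda>R c. if c \<in> S then R c + 1 else 0"])
      show "\<forall>R\<in>P b. (\<lambda>c. if c \<in> S then R c - 1 + 1 else 0) = R"
      proof
        fix R assume R: "R \<in> P b"
        then have bij: "bij_betw R S {1..N}" using LE_bij[OF fin] N_def unfolding P_def by auto
        show "(\<lambda>c. if c \<in> S then R c - 1 + 1 else 0) = R"
        proof
          fix c show "(if c \<in> S then R c - 1 + 1 else 0) = R c"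
          proof (cases "c \<in> S")
            case True
            then have "R c \<ge> 1" using bij unfolding bij_betw_def by auto
            then show ?thesis using True by simp
          next
            case False then show ?thesis using R unfolding P_def LE_def by auto
          qed
        qed
      qed
      show "\<forall>R\<in>LE g (S - {b}). (\<lambda>c. (if c \<in> S then R c + 1 else 0) - 1) = R"
        unfolding LE_def by auto
      show "(\<lambda>R c. R c - 1) ` P b \<subseteq> LE g (S - {b})"
      proof
        fix R' assume "R' \<in> (\<lambda>R c. R c - 1) ` P b"
        then obtain R where R: "R \<in> LE g S" "R b = 1" "R' = (\<lambda>c. R c - 1)" unfolding P_def by blast
        have bij: "bij_betw R S {1..N}" using LE_bij[OF fin R(1)] N_def by simp
        have ge: "\<And>c. c \<in> S \<Longrightarrow> R c \<ge> 1 \<and> R c \<le> N" using bij unfolding bij_betw_def by auto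
        have injR: "inj_on R S" using bij unfolding bij_betw_def by blast
        have "bij_betw R' (S - {b}) {1..N - 1}"
          unfolding bij_betw_def
        proof
          show "inj_on R' (S - {b})"
          proof (rule inj_onI)
            fix c d assume "c \<in> S - {b}" "d \<in> S - {b}" "R' c = R' d"
            moreover have "R c \<ge> 1" "R d \<ge> 1" using ge \<open>c \<in> S - {b}\<close> \<open>d \<in> S - {b}\<close> by auto
            ultimately have "R c = R d" using R(3) by simp
            then show "c = d" using injR \<open>c \<in> S - {b}\<close> \<open>d \<in> S - {b}\<close> unfolding inj_on_def by blast
          qed
          show "R' ` (S - {b}) = {1..N - 1}"
          proof
            show "R' ` (S - {b}) \<subseteq> {1..N - 1}"
            proof
              fix j assume "j \<in> R' ` (S - {b})"
              then obtain c where c: "c \<in> S" "c \<noteq> b" "j = R c - 1" using R(3) by blast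
              have "R c \<noteq> 1" using c injR R(2) bS unfolding inj_on_def by metis
              then show "j \<in> {1..N - 1}" using ge[OF c(1)] c(3) by auto
            qed
            show "{1..N - 1} \<subseteq> R' ` (S - {b})"
            proof
              fix j assume j: "j \<in> {1..N - 1}"
              then have "j + 1 \<in> R ` S" using bij unfolding bij_betw_def by auto
              then obtain c where c: "c \<in> S" "R c = j + 1" by (metis imageE)
              then have "c \<noteq> b" using R(2) j by auto
              then show "j \<in> R' ` (S - {b})" using c R(3) by force
            qed
          qed
        qed
        moreover have "\<forall>c. c \<notin> S - {b} \<longrightarrow> R' c = 0" using R unfolding LE_def by auto
        moreover have "\<forall>c\<in>S - {b}. \<forall>d\<in>S - {b}. g c d \<longrightarrow> R' c < R' d"
        proof (intro ballI impI)
          fix c d assume cd: "c \<in> S - {b}" "d \<in> S - {b}" "g c d"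
          then have "R c < R d" using R unfolding LE_def by blast
          moreover have "R c \<ge> 1" using ge cd by blast
          ultimately show "R' c < R' d" using R(3) by simp
        qed
        ultimately show "R' \<in> LE g (S - {b})" unfolding LE_def by blast
      qed
      show "(\<lambda>R c. if c \<in> S then R c + 1 else 0) ` LE g (S - {b}) \<subseteq> P b"
      proof
        fix R assume "R \<in> (\<lambda>R c. if c \<in> S then R c + 1 else 0) ` LE g (S - {b})"
        then obtain R' where R': "R' \<in> LE g (S - {b})" "R = (\<lambda>c. if c \<in> S then R' c + 1 else 0)" by blast
        have bij: "bij_betw R' (S - {b}) {1..N - 1}" using LE_bij[OF _ R'(1)] fin cS' by simp
        have R'b: "R' b = 0" using R'(1) unfolding LE_def by auto
        have Rb: "R b = 1" using R'(2) R'b bS by simp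
        have rng: "\<And>c. c \<in> S - {b} \<Longrightarrow> R' c \<in> {1..N - 1}" using bij unfolding bij_betw_def by auto
        have "bij_betw R S {1..N}"
          unfolding bij_betw_def
        proof
          show "inj_on R S"
          proof (rule inj_onI)
            fix c d assume cd: "c \<in> S" "d \<in> S" "R c = R d"
            show "c = d"
            proof (cases "c = b \<or> d = b")
              case True
              have Rge: "R e \<ge> 2" if "e \<in> S" "e \<noteq> b" for e
              proof -
                have "R' e \<ge> 1" using rng[of e] that by simp
                then show ?thesis using R'(2) that by simp
              qed
              show ?thesis
              proof (rule ccontr)
                assume "c \<noteq> d"
                show False
                  using True
                proof
                  assume "c = b" then have "d \<noteq> b" using \<open>c \<noteq> d\<close> by simp
                  then have "R d \<ge> 2" using Rge cd by blast
                  then show False using cd(3) \<open>c = b\<close> Rb by simp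
                next
                  assume "d = b" then have "c \<noteq> b" using \<open>c \<noteq> d\<close> by simp
                  then have "R c \<ge> 2" using Rge cd by blast
                  then show False using cd(3) \<open>d = b\<close> Rb by simp
                qed
              qed
            next
              case False
              then have "R' c = R' d" using cd R'(2) by simp
              then show ?thesis using bij cd False unfolding bij_betw_def inj_on_def by blast
            qed
          qed
          show "R ` S = {1..N}"
          proof
            show "R ` S \<subseteq> {1..N}"
            proof
              fix j assume "j \<in> R ` S"
              then obtain c where c: "c \<in> S" "j = R c" by blast
              show "j \<in> {1..N}"
              proof (cases "c = b")
                case True then show ?thesis using c Rb N1 by simp
              next
                case False then have "R' c \<in> {1..N - 1}" using rng c by simp
                then show ?thesis using c R'(2) by auto
              qed
            qed
            show "{1..N} \<subseteq> R ` S"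
            proof
              fix j assume j: "j \<in> {1..N}"
              show "j \<in> R ` S"
              proof (cases "j = 1")
                case True show ?thesis by (rule rev_image_eqI[OF bS]) (simp add: Rb True)
              next
                case False
                then have "j - 1 \<in> R' ` (S - {b})" using j bij unfolding bij_betw_def by auto
                then obtain c where "c \<in> S - {b}" "R' c = j - 1" by (metis imageE)
                then have "R c = j" using R'(2) False j by auto
                then show ?thesis using \<open>c \<in> S - {b}\<close> by (intro rev_image_eqI[of c]) auto
              qed
            qed
          qed
        qed
        moreover have "\<forall>c. c \<notin> S \<longrightarrow> R c = 0" using R'(2) by auto
        moreover have "\<forall>c\<in>S. \<forall>d\<in>S. g c d \<longrightarrow> R c < R d"
        proof (intro ballI impI)
          fix c d assume cd: "c \<in> S" "d \<in> S" "g c d"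
          have "d \<noteq> b" using bmin cd by blast
          show "R c < R d"
          proof (cases "c = b")
            case True
            have "R' d \<ge> 1" using rng cd \<open>d \<noteq> b\<close> by auto
            then show ?thesis using True Rb R'(2) cd by auto
          next
            case False
            have "R' c < R' d" using R'(1) cd \<open>d \<noteq> b\<close> False unfolding LE_def by blast
            then show ?thesis using R'(2) cd by simp
          qed
        qed
        ultimately show "R \<in> P b" unfolding P_def LE_def using Rb by blast
      qed
    qed
  qed
  have "card (LE g S) = (\<Sum>b\<in>Mn. card (P b))"
    unfolding cover by (rule card_UN_disjoint[OF fMn fP disj])
  also have "\<dots> = (\<Sum>b\<in>Mn. card (LE g (S - {b})))" by (rule sum.cong) (auto simp: cardP)
  finally show ?thesis unfolding Mn_def .
qed

locale cyl =
  fixes k n :: nat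
  assumes k1: "1 \<le> k" and kn: "k < n"
begin

lemma Dpos: "int n - int k > 0" using kn by simp
lemma Kpos: "int k > 0" using k1 by simp

lemma cyl_mono: "cylindric k n lam \<Longrightarrow> a \<le> b \<Longrightarrow> lam b \<le> lam a"
  unfolding cylindric_def by blast

lemma cyl_step: "cylindric k n lam \<Longrightarrow> lam (x - int k) = lam x + (int n - int k)"
  unfolding cylindric_def by (metis diff_add_cancel)

lemma cyl_shift_nat:
  assumes "cylindric k n lam"
  shows "lam (x - int t * int k) = lam x + int t * (int n - int k)"
proof (induction t)
  case 0 then show ?case by simp
next
  case (Suc t)
  have "lam (x - int (Suc t) * int k) = lam ((x - int t * int k) - int k)"
    by (simp add: algebra_simps)
  also have "\<dots> = lam (x - int t * int k) + (int n - int k)" by (rule cyl_step[OF assms])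
  finally show ?case using Suc by (simp add: algebra_simps)
qed

lemma cyl_shift:
  assumes "cylindric k n lam"
  shows "lam (x - t * int k) = lam x + t * (int n - int k)"
proof (cases "t \<ge> 0")
  case True
  define s where "s = nat t"
  have "t = int s" using True s_def by simp
  then show ?thesis using cyl_shift_nat[OF assms] by simp
next
  case False
  define s where "s = nat (- t)"
  have s: "t = - int s" using False s_def by simp
  have "lam (x + int s * int k - int s * int k) = lam (x + int s * int k) + int s * (int n - int k)"
    by (rule cyl_shift_nat[OF assms])
  then show ?thesis using s by (simp add: algebra_simps)
qed

lemma cyl_mod:
  assumes "cylindric k n lam"
  shows "lam x = lam (x mod int k) - (x div int k) * (int n - int k)"
proof -
  have "x mod int k = x - (x div int k) * int k" by (simp add: minus_div_mult_eq_mod)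
  then show ?thesis using cyl_shift[OF assms, of x "x div int k"] by simp
qed

lemma cyl_eqI:
  assumes "cylindric k n a" "cylindric k n b" "\<And>x. 0 \<le> x \<Longrightarrow> x < int k \<Longrightarrow> a x = b x"
  shows "a = b"
proof
  fix x
  have "a (x mod int k) = b (x mod int k)" using assms(3) Kpos by simp
  then show "a x = b x" using cyl_mod[OF assms(1), of x] cyl_mod[OF assms(2), of x] by simp
qed

lemma box_mem: "q \<in> box_of k n p \<longleftrightarrow> (\<exists>t. q = (fst p - t * int k, snd p + t * (int n - int k)))"
  unfolding box_of_def by auto

lemma box_self: "p \<in> box_of k n p"
  unfolding box_mem by (rule exI[of _ 0]) simp

lemma box_eq_iff: "box_of k n p = box_of k n q \<longleftrightarrow> q \<in> box_of k n p"
proof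
  assume "box_of k n p = box_of k n q" then show "q \<in> box_of k n p" using box_self by simp
next
  assume "q \<in> box_of k n p"
  then obtain t where t: "q = (fst p - t * int k, snd p + t * (int n - int k))" unfolding box_mem by blast
  show "box_of k n p = box_of k n q"
  proof (rule set_eqI)
    fix r
    show "r \<in> box_of k n p \<longleftrightarrow> r \<in> box_of k n q"
      unfolding box_mem t
      apply auto
       apply (rule_tac x="ta - t" in exI, simp add: algebra_simps)
      apply (rule_tac x="ta + t" in exI, simp add: algebra_simps)
      done
  qed
qed

lemma box_same_x:
  assumes "box_of k n p = box_of k n q" "fst p = fst q" shows "p = q"
proof -
  obtain t where t: "q = (fst p - t * int k, snd p + t * (int n - int k))"
    using assms(1) unfolding box_eq_iff box_mem by blast
  have "t * int k = 0" using assms(2) t by simp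
  then have "t = 0" using Kpos by simp
  then show ?thesis using t by simp
qed

lemma box_same_y:
  assumes "box_of k n p = box_of k n q" "snd p = snd q" shows "p = q"
proof -
  obtain t where t: "q = (fst p - t * int k, snd p + t * (int n - int k))"
    using assms(1) unfolding box_eq_iff box_mem by blast
  have "t * (int n - int k) = 0" using assms(2) t by simp
  then have "t = 0" using Dpos by simp
  then show ?thesis using t by simp
qed

lemma in_part_box:
  assumes "cylindric k n lam" "q \<in> box_of k n p"
  shows "in_part lam q \<longleftrightarrow> in_part lam p"
proof -
  obtain t where t: "q = (fst p - t * int k, snd p + t * (int n - int k))" using assms(2) unfolding box_mem by blast
  show ?thesis unfolding t in_part_def using cyl_shift[OF assms(1), of "fst p" t] by simp
qed

lemma skew_mem:
  assumes "cylindric k n lam" "cylindric k n mu"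
  shows "box_of k n p \<in> skew_boxes k n lam mu \<longleftrightarrow> in_part lam p \<and> \<not> in_part mu p"
proof
  assume "box_of k n p \<in> skew_boxes k n lam mu"
  then obtain q where q: "box_of k n p = box_of k n q" "in_part lam q" "\<not> in_part mu q"
    unfolding skew_boxes_def by blast
  have "p \<in> box_of k n q" using q(1) box_self by metis
  then show "in_part lam p \<and> \<not> in_part mu p" using in_part_box[OF assms(1)] in_part_box[OF assms(2)] q by blast
qed (unfold skew_boxes_def, blast)

lemma skew_elem: "b \<in> skew_boxes k n lam mu \<Longrightarrow> \<exists>p. b = box_of k n p \<and> in_part lam p \<and> \<not> in_part mu p"
  unfolding skew_boxes_def by blast


lemma box_canon:
  "box_of k n p = box_of k n (fst p mod int k, snd p + (fst p div int k) * (int n - int k))"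
proof -
  have "fst p mod int k = fst p - (fst p div int k) * int k" by (simp add: minus_div_mult_eq_mod)
  then have "(fst p mod int k, snd p + (fst p div int k) * (int n - int k)) \<in> box_of k n p"
    unfolding box_mem by auto
  then show ?thesis unfolding box_eq_iff .
qed

lemma box_inj: "inj_on (box_of k n) (Sigma {0..<int k} A)"
proof (rule inj_onI)
  fix p q assume p: "p \<in> Sigma {0..<int k} A" and q: "q \<in> Sigma {0..<int k} A"
    and e: "box_of k n p = box_of k n q"
  obtain t where t: "q = (fst p - t * int k, snd p + t * (int n - int k))"
    using e unfolding box_eq_iff box_mem by blast
  have a: "0 \<le> fst p" "fst p < int k" "0 \<le> fst q" "fst q < int k" using p q by auto
  have fq: "fst q = fst p - t * int k" using t by simp
  have "t = 0"
  proof (rule ccontr)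
    assume "t \<noteq> 0"
    then consider "t \<ge> 1" | "t \<le> -1" by linarith
    then show False
    proof cases
      case 1
      then have "t * int k \<ge> 1 * int k" using Kpos by (intro mult_right_mono) auto
      then show False using a fq by linarith
    next
      case 2
      then have "t * int k \<le> -1 * int k" using Kpos by (intro mult_right_mono) auto
      then show False using a fq by linarith
    qed
  qed
  then show "p = q" using t by simp
qed

lemma skew_image:
  assumes "cylindric k n lam" "cylindric k n mu"
  shows "skew_boxes k n lam mu = box_of k n ` Sigma {0..<int k} (\<lambda>x. {mu x<..lam x})"
proof
  show "skew_boxes k n lam mu \<subseteq> box_of k n ` Sigma {0..<int k} (\<lambda>x. {mu x<..lam x})"
  proof
    fix b assume "b \<in> skew_boxes k n lam mu"
    then obtain p where p: "b = box_of k n p" "in_part lam p" "\<not> in_part mu p" using skew_elem by blast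
    define q where "q = (fst p mod int k, snd p + (fst p div int k) * (int n - int k))"
    have bq: "b = box_of k n q" using p(1) box_canon q_def by simp
    have "in_part lam q" "\<not> in_part mu q" using skew_mem[OF assms, of q] skew_mem[OF assms, of p] p bq by auto
    moreover have "0 \<le> fst q" "fst q < int k" using Kpos q_def by auto
    ultimately have "q \<in> Sigma {0..<int k} (\<lambda>x. {mu x<..lam x})" unfolding in_part_def
      by (cases q) auto
    then show "b \<in> box_of k n ` Sigma {0..<int k} (\<lambda>x. {mu x<..lam x})" using bq by blast
  qed
next
  show "box_of k n ` Sigma {0..<int k} (\<lambda>x. {mu x<..lam x}) \<subseteq> skew_boxes k n lam mu"
    unfolding skew_boxes_def in_part_def by force
qed

lemma card_skew:
  assumes "cylindric k n lam" "cylindric k n mu"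
  shows "card (skew_boxes k n lam mu) = (\<Sum>x\<in>{0..<int k}. nat (lam x - mu x))"
proof -
  have "card (skew_boxes k n lam mu) = card (Sigma {0..<int k} (\<lambda>x. {mu x<..lam x}))"
    unfolding skew_image[OF assms] by (rule card_image[OF box_inj])
  also have "\<dots> = (\<Sum>x\<in>{0..<int k}. nat (lam x - mu x))" by simp
  finally show ?thesis .
qed

lemma finite_skew:
  assumes "cylindric k n lam" "cylindric k n mu"
  shows "finite (skew_boxes k n lam mu)"
  unfolding skew_image[OF assms] by simp


definition cov :: "(int \<Rightarrow> int) \<Rightarrow> (int \<Rightarrow> int) \<Rightarrow> bool" where
  "cov mu lam \<longleftrightarrow> cylindric k n mu \<and> cylindric k n lam \<and> subpart mu lam \<and> card (skew_boxes k n lam mu) = 1"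

lemma card_add:
  assumes "cylindric k n mu" "cylindric k n sg" "cylindric k n lam" "subpart mu sg" "subpart sg lam"
  shows "card (skew_boxes k n lam mu) = card (skew_boxes k n lam sg) + card (skew_boxes k n sg mu)"
proof -
  have "\<And>x. nat (lam x - mu x) = nat (lam x - sg x) + nat (sg x - mu x)"
  proof -
    fix x
    have "mu x \<le> sg x" "sg x \<le> lam x" using assms(4,5) unfolding subpart_def by auto
    then have "nat (lam x - sg x) + nat (sg x - mu x) = nat ((lam x - sg x) + (sg x - mu x))"
      by (intro nat_add_distrib[symmetric]) auto
    then show "nat (lam x - mu x) = nat (lam x - sg x) + nat (sg x - mu x)" by simp
  qed
  then show ?thesis using card_skew assms(1-3) by (simp add: sum.distrib)
qed

lemma card0:
  assumes "cylindric k n mu" "cylindric k n sg" "subpart mu sg" "card (skew_boxes k n sg mu) = 0"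
  shows "sg = mu"
proof (rule cyl_eqI[OF assms(2,1)])
  fix x assume x: "0 \<le> x" "x < int k"
  have "(\<Sum>x\<in>{0..<int k}. nat (sg x - mu x)) = 0" using assms(4) card_skew[OF assms(2,1)] by simp
  then have "nat (sg x - mu x) = 0" using x by simp
  then have "sg x \<le> mu x" by simp
  moreover have "mu x \<le> sg x" using assms(3) unfolding subpart_def by auto
  ultimately show "sg x = mu x" by simp
qed

lemma card_self: "cylindric k n lam \<Longrightarrow> card (skew_boxes k n lam lam) = 0"
  using card_skew by simp

lemma cyl_max:
  assumes "cylindric k n a" "cylindric k n b" shows "cylindric k n (\<lambda>x. max (a x) (b x))"
  unfolding cylindric_def
proof (intro conjI allI impI)
  fix x y :: int assume "x \<le> y"
  then have "a y \<le> a x" "b y \<le> b x" using cyl_mono[OF assms(1)] cyl_mono[OF assms(2)] by blast+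
  then show "max (a y) (b y) \<le> max (a x) (b x)" by (simp add: max_def)
next
  fix m
  have "a m = a (m + int k) + (int n - int k)" "b m = b (m + int k) + (int n - int k)"
    using assms unfolding cylindric_def by blast+
  then show "max (a m) (b m) = max (a (m + int k)) (b (m + int k)) + (int n - int k)"
    by (simp add: max_def)
qed

lemma cyl_min:
  assumes "cylindric k n a" "cylindric k n b" shows "cylindric k n (\<lambda>x. min (a x) (b x))"
  unfolding cylindric_def
proof (intro conjI allI impI)
  fix x y :: int assume "x \<le> y"
  then have "a y \<le> a x" "b y \<le> b x" using cyl_mono[OF assms(1)] cyl_mono[OF assms(2)] by blast+
  then show "min (a y) (b y) \<le> min (a x) (b x)" by (simp add: min_def)
next
  fix m
  have "a m = a (m + int k) + (int n - int k)" "b m = b (m + int k) + (int n - int k)"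
    using assms unfolding cylindric_def by blast+
  then show "min (a m) (b m) = min (a (m + int k)) (b (m + int k)) + (int n - int k)"
    by (simp add: min_def)
qed

lemma card_maxmin_low:
  assumes "cylindric k n mu" "cylindric k n a" "cylindric k n b" "subpart mu a" "subpart mu b"
  shows "card (skew_boxes k n (\<lambda>x. max (a x) (b x)) mu) + card (skew_boxes k n (\<lambda>x. min (a x) (b x)) mu)
       = card (skew_boxes k n a mu) + card (skew_boxes k n b mu)"
proof -
  have "\<And>x. nat (max (a x) (b x) - mu x) + nat (min (a x) (b x) - mu x) = nat (a x - mu x) + nat (b x - mu x)"
    using assms(4,5) unfolding subpart_def by (simp add: max_def min_def)
  then show ?thesis using card_skew assms(1-3) cyl_max[OF assms(2,3)] cyl_min[OF assms(2,3)]
    by (simp add: sum.distrib[symmetric])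
qed

lemma card_maxmin_up:
  assumes "cylindric k n lam" "cylindric k n a" "cylindric k n b" "subpart a lam" "subpart b lam"
  shows "card (skew_boxes k n lam (\<lambda>x. max (a x) (b x))) + card (skew_boxes k n lam (\<lambda>x. min (a x) (b x)))
       = card (skew_boxes k n lam a) + card (skew_boxes k n lam b)"
proof -
  have "\<And>x. nat (lam x - max (a x) (b x)) + nat (lam x - min (a x) (b x)) = nat (lam x - a x) + nat (lam x - b x)"
    using assms(4,5) unfolding subpart_def by (simp add: max_def min_def)
  then show ?thesis using card_skew assms(1-3) cyl_max[OF assms(2,3)] cyl_min[OF assms(2,3)]
    by (simp add: sum.distrib[symmetric])
qed


lemma low_is_min:
  assumes "cov mu a" "cov mu b" "a \<noteq> b"
  shows "mu = (\<lambda>x. min (a x) (b x))"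
proof -
  let ?m = "\<lambda>x. min (a x) (b x)"
  have c: "cylindric k n mu" "cylindric k n a" "cylindric k n b" "subpart mu a" "subpart mu b"
    "card (skew_boxes k n a mu) = 1" "card (skew_boxes k n b mu) = 1"
    using assms unfolding cov_def by auto
  have cm: "cylindric k n ?m" using cyl_min c by blast
  have s: "subpart mu ?m" "subpart ?m a" "subpart ?m b" using c unfolding subpart_def by auto
  have e1: "card (skew_boxes k n a mu) = card (skew_boxes k n a ?m) + card (skew_boxes k n ?m mu)"
    by (rule card_add[OF c(1) cm c(2) s(1,2)])
  have e2: "card (skew_boxes k n b mu) = card (skew_boxes k n b ?m) + card (skew_boxes k n ?m mu)"
    by (rule card_add[OF c(1) cm c(3) s(1,3)])
  have "card (skew_boxes k n ?m mu) = 0"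
  proof (rule ccontr)
    assume "card (skew_boxes k n ?m mu) \<noteq> 0"
    then have "card (skew_boxes k n a ?m) = 0" "card (skew_boxes k n b ?m) = 0" using e1 e2 c by auto
    then have "a = ?m" "b = ?m" using card0 cm c s by blast+
    then show False using assms(3) by simp
  qed
  then have "?m = mu" using card0 c(1) cm s(1) by blast
  then show ?thesis by simp
qed

lemma low_gives_max:
  assumes "cov mu a" "cov mu b" "a \<noteq> b"
  shows "cov a (\<lambda>x. max (a x) (b x))"
proof -
  let ?m = "\<lambda>x. min (a x) (b x)"
  let ?M = "\<lambda>x. max (a x) (b x)"
  have c: "cylindric k n mu" "cylindric k n a" "cylindric k n b" "subpart mu a" "subpart mu b"
    "card (skew_boxes k n a mu) = 1" "card (skew_boxes k n b mu) = 1"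
    using assms unfolding cov_def by auto
  have cM: "cylindric k n ?M" using cyl_max c by blast
  have mu: "mu = ?m" by (rule low_is_min[OF assms])
  have "card (skew_boxes k n ?M mu) + card (skew_boxes k n ?m mu) = 2"
    using card_maxmin_low[OF c(1-5)] c by simp
  then have M2: "card (skew_boxes k n ?M mu) = 2" using card_self[OF c(1)] mu by simp
  have s: "subpart a ?M" "subpart mu a" using c unfolding subpart_def by auto
  have "card (skew_boxes k n ?M mu) = card (skew_boxes k n ?M a) + card (skew_boxes k n a mu)"
    by (rule card_add[OF c(1,2) cM s(2,1)])
  then have "card (skew_boxes k n ?M a) = 1" using M2 c by simp
  then show ?thesis unfolding cov_def using c cM s by blast
qed

lemma up_is_max:
  assumes "cov a lam" "cov b lam" "a \<noteq> b"
  shows "lam = (\<lambda>x. max (a x) (b x))"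
proof -
  let ?M = "\<lambda>x. max (a x) (b x)"
  have c: "cylindric k n lam" "cylindric k n a" "cylindric k n b" "subpart a lam" "subpart b lam"
    "card (skew_boxes k n lam a) = 1" "card (skew_boxes k n lam b) = 1"
    using assms unfolding cov_def by auto
  have cM: "cylindric k n ?M" using cyl_max c by blast
  have s: "subpart ?M lam" "subpart a ?M" "subpart b ?M" using c unfolding subpart_def by auto
  have e1: "card (skew_boxes k n lam a) = card (skew_boxes k n lam ?M) + card (skew_boxes k n ?M a)"
    by (rule card_add[OF c(2) cM c(1) s(2,1)])
  have e2: "card (skew_boxes k n lam b) = card (skew_boxes k n lam ?M) + card (skew_boxes k n ?M b)"
    by (rule card_add[OF c(3) cM c(1) s(3,1)])
  have "card (skew_boxes k n lam ?M) = 0"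
  proof (rule ccontr)
    assume "card (skew_boxes k n lam ?M) \<noteq> 0"
    then have "card (skew_boxes k n ?M a) = 0" "card (skew_boxes k n ?M b) = 0" using e1 e2 c by auto
    then have "?M = a" "?M = b" using card0 cM c s by blast+
    then show False using assms(3) by simp
  qed
  then have "lam = ?M" using card0 c(1) cM s(1) by blast
  then show ?thesis by simp
qed

lemma up_gives_min:
  assumes "cov a lam" "cov b lam" "a \<noteq> b"
  shows "cov (\<lambda>x. min (a x) (b x)) a"
proof -
  let ?m = "\<lambda>x. min (a x) (b x)"
  let ?M = "\<lambda>x. max (a x) (b x)"
  have c: "cylindric k n lam" "cylindric k n a" "cylindric k n b" "subpart a lam" "subpart b lam"
    "card (skew_boxes k n lam a) = 1" "card (skew_boxes k n lam b) = 1"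
    using assms unfolding cov_def by auto
  have cm: "cylindric k n ?m" using cyl_min c by blast
  have lam: "lam = ?M" by (rule up_is_max[OF assms])
  have "card (skew_boxes k n lam ?M) + card (skew_boxes k n lam ?m) = 2"
    using card_maxmin_up[OF c(1-5)] c by simp
  then have M2: "card (skew_boxes k n lam ?m) = 2" using card_self[OF c(1)] lam by simp
  have s: "subpart ?m a" "subpart a lam" using c unfolding subpart_def by auto
  have "card (skew_boxes k n lam ?m) = card (skew_boxes k n lam a) + card (skew_boxes k n a ?m)"
    by (rule card_add[OF cm c(2) c(1) s(1,2)])
  then have "card (skew_boxes k n a ?m) = 1" using M2 c by simp
  then show ?thesis unfolding cov_def using c cm s by blast
qed

lemma KL_neq:
  assumes "a \<noteq> b"
  shows "card {mu. cov mu a \<and> cov mu b} = card {lam. cov a lam \<and> cov b lam}"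
proof -
  let ?m = "\<lambda>x. min (a x) (b x)"
  let ?M = "\<lambda>x. max (a x) (b x)"
  show ?thesis
  proof (cases "{mu. cov mu a \<and> cov mu b} = {}")
    case False
    then obtain mu where mu: "cov mu a" "cov mu b" by blast
    have A: "{mu. cov mu a \<and> cov mu b} = {?m}"
    proof -
      have "cov ?m a" "cov ?m b" using mu low_is_min[OF mu assms] by simp_all
      moreover have "\<And>x. cov x a \<Longrightarrow> cov x b \<Longrightarrow> x = ?m" using low_is_min assms by blast
      ultimately show ?thesis by blast
    qed
    have B: "{lam. cov a lam \<and> cov b lam} = {?M}"
    proof -
      have "cov a ?M" using low_gives_max[OF mu assms] .
      moreover have "cov b ?M" using low_gives_max[OF mu(2,1)] assms by (simp add: max.commute)
      moreover have "\<And>x. cov a x \<Longrightarrow> cov b x \<Longrightarrow> x = ?M" using up_is_max assms by blast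
      ultimately show ?thesis by blast
    qed
    show ?thesis unfolding A B by simp
  next
    case True
    have "{lam. cov a lam \<and> cov b lam} = {}"
    proof (rule ccontr)
      assume "{lam. cov a lam \<and> cov b lam} \<noteq> {}"
      then obtain lam where "cov a lam" "cov b lam" by blast
      then have "cov ?m a" "cov ?m b" using up_gives_min[of a lam b] up_gives_min[of b lam a] assms
        by (auto simp: min.commute)
      then show False using True by blast
    qed
    then show ?thesis using True by (simp only: card.empty)
  qed
qed


definition dec :: "(int \<Rightarrow> int) \<Rightarrow> int \<Rightarrow> int \<Rightarrow> int" where
  "dec nu x = (\<lambda>z. if z mod int k = x mod int k then nu z - 1 else nu z)"
definition inc :: "(int \<Rightarrow> int) \<Rightarrow> int \<Rightarrow> int \<Rightarrow> int" where
  "inc nu x = (\<lambda>z. if z mod int k = x mod int k then nu z + 1 else nu z)"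

lemma cyl_per: "cylindric k n nu \<Longrightarrow> nu m = nu (m + int k) + (int n - int k)"
  unfolding cylindric_def by blast

lemma same_class: "z mod int k = x mod int k \<Longrightarrow> \<exists>t. z = x - t * int k"
proof -
  assume "z mod int k = x mod int k"
  then have "int k dvd x - z" using mod_eq_dvd_iff[of x "int k" z] by simp
  then obtain t where "x - z = int k * t" by (auto elim: dvdE)
  then show ?thesis by (intro exI[of _ t]) (simp add: algebra_simps)
qed

lemma class_shift[simp]: "(x - t * int k) mod int k = x mod int k"
  using mod_eq_dvd_iff[of "x - t * int k" "int k" x] by simp

lemma class_succ: "(x + 1) mod int k = x mod int k \<Longrightarrow> k = 1"
proof -
  assume "(x + 1) mod int k = x mod int k"
  then have "int k dvd (x + 1) - x" using mod_eq_dvd_iff[of "x + 1" "int k" x] by simp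
  then have "int k dvd 1" by simp
  then show "k = 1" by simp
qed

lemma class_pred: "(x - 1) mod int k = x mod int k \<Longrightarrow> k = 1"
  using class_succ[of "x - 1"] by simp

lemma dec_cyl:
  assumes c: "cylindric k n nu" and d: "nu (x + 1) < nu x"
  shows "cylindric k n (dec nu x)"
  unfolding cylindric_def
proof (intro conjI allI impI)
  fix a b :: int assume ab: "a \<le> b"
  have m: "nu b \<le> nu a" using cyl_mono[OF c ab] .
  show "dec nu x b \<le> dec nu x a"
  proof (cases "a mod int k = x mod int k \<and> b mod int k \<noteq> x mod int k")
    case True
    then obtain t where t: "a = x - t * int k" using same_class by blast
    have "a \<noteq> b" using True by auto
    then have "a + 1 \<le> b" using ab by simp
    then have "nu b \<le> nu (a + 1)" using cyl_mono[OF c] by blast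
    also have "nu (a + 1) = nu (x + 1) + t * (int n - int k)"
    proof -
      have "a + 1 = x + 1 - t * int k" using t by simp
      then show ?thesis by (simp only:) (rule cyl_shift[OF c])
    qed
    also have "nu a = nu x + t * (int n - int k)" using cyl_shift[OF c, of x t] t by simp
    ultimately show ?thesis using True d unfolding dec_def by simp
  next
    case False
    then show ?thesis using m unfolding dec_def by auto
  qed
next
  fix m
  have "(m + int k) mod int k = m mod int k" by simp
  then show "dec nu x m = dec nu x (m + int k) + (int n - int k)"
    using cyl_per[OF c, of m] unfolding dec_def by simp
qed

lemma inc_cyl:
  assumes c: "cylindric k n nu" and d: "nu x < nu (x - 1)"
  shows "cylindric k n (inc nu x)"
  unfolding cylindric_def
proof (intro conjI allI impI)
  fix a b :: int assume ab: "a \<le> b"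
  have m: "nu b \<le> nu a" using cyl_mono[OF c ab] .
  show "inc nu x b \<le> inc nu x a"
  proof (cases "b mod int k = x mod int k \<and> a mod int k \<noteq> x mod int k")
    case True
    then obtain t where t: "b = x - t * int k" using same_class by blast
    have "a \<noteq> b" using True by auto
    then have "a \<le> b - 1" using ab by simp
    then have "nu (b - 1) \<le> nu a" using cyl_mono[OF c] by blast
    moreover have "nu (b - 1) = nu (x - 1) + t * (int n - int k)"
    proof -
      have "b - 1 = x - 1 - t * int k" using t by simp
      then show ?thesis by (simp only:) (rule cyl_shift[OF c])
    qed
    moreover have "nu b = nu x + t * (int n - int k)" using cyl_shift[OF c, of x t] t by simp
    ultimately show ?thesis using True d unfolding inc_def by simp
  next
    case False
    then show ?thesis using m unfolding inc_def by auto
  qed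
next
  fix m
  have "(m + int k) mod int k = m mod int k" by simp
  then show "inc nu x m = inc nu x (m + int k) + (int n - int k)"
    using cyl_per[OF c, of m] unfolding inc_def by simp
qed

lemma dec_skew:
  assumes c: "cylindric k n nu" and d: "nu (x + 1) < nu x"
  shows "skew_boxes k n nu (dec nu x) = {box_of k n (x, nu x)}"
proof -
  have cd: "cylindric k n (dec nu x)" by (rule dec_cyl[OF assms])
  show ?thesis
  proof (rule set_eqI, rule iffI)
    fix b assume "b \<in> skew_boxes k n nu (dec nu x)"
    then obtain p where p: "b = box_of k n p" "in_part nu p" "\<not> in_part (dec nu x) p" using skew_elem by blast
    have cl: "fst p mod int k = x mod int k" and y: "snd p = nu (fst p)"
      using p(2,3) unfolding in_part_def dec_def by (auto split: if_splits)
    obtain t where t: "fst p = x - t * int k" using same_class[OF cl] by blast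
    have "nu (fst p) = nu x + t * (int n - int k)" using cyl_shift[OF c, of x t] t by simp
    then have "p \<in> box_of k n (x, nu x)" unfolding box_mem using t y by (intro exI[of _ t]) (simp add: prod_eq_iff)
    then have "b = box_of k n (x, nu x)" using p(1) box_eq_iff by metis
    then show "b \<in> {box_of k n (x, nu x)}" by simp
  next
    fix b assume "b \<in> {box_of k n (x, nu x)}"
    then show "b \<in> skew_boxes k n nu (dec nu x)"
      using skew_mem[OF c cd, of "(x, nu x)"] unfolding in_part_def dec_def by simp
  qed
qed

lemma dec_cov:
  assumes c: "cylindric k n nu" and d: "nu (x + 1) < nu x"
  shows "cov (dec nu x) nu"
  unfolding cov_def using dec_cyl[OF assms] dec_skew[OF assms] c
  by (auto simp: subpart_def dec_def)

lemma cov_dec: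
  assumes cv: "cov nu' nu"
  shows "\<exists>x. nu' = dec nu x \<and> nu (x + 1) < nu x"
proof -
  have c: "cylindric k n nu" "cylindric k n nu'" "subpart nu' nu" "card (skew_boxes k n nu nu') = 1"
    using cv unfolding cov_def by auto
  obtain b where b: "skew_boxes k n nu nu' = {b}" using c(4) card_1_singletonE by blast
  have bin: "b \<in> skew_boxes k n nu nu'" using b by simp
  obtain p where p: "b = box_of k n p" "in_part nu p" "\<not> in_part nu' p" using skew_elem[OF bin] by blast
  obtain x y where xy: "p = (x, y)" by (cases p)
  have inS: "\<And>q. in_part nu q \<Longrightarrow> \<not> in_part nu' q \<Longrightarrow> box_of k n q = b"
    using skew_mem[OF c(1,2)] b by blast
  have eq: "nu' = dec nu x"
  proof
    fix z
    show "nu' z = dec nu x z"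
    proof (cases "z mod int k = x mod int k")
      case True
      obtain t where t: "z = x - t * int k" using same_class[OF True] by blast
      define q where "q = (z, y + t * (int n - int k))"
      have qb: "q \<in> box_of k n p" unfolding q_def box_mem xy t by auto
      have q1: "in_part nu q" "\<not> in_part nu' q" using qb p in_part_box c by blast+
      then have lt: "nu' z < y + t * (int n - int k)" "y + t * (int n - int k) \<le> nu z"
        unfolding q_def in_part_def by auto
      have zb: "box_of k n (z, nu z) = b" using inS lt unfolding in_part_def by simp
      have qbb: "box_of k n q = b" using qb p(1) box_eq_iff[of p q] by simp
      have "(z, nu z) = q" by (rule box_same_x) (use zb qbb q_def in auto)
      then have nz: "nu z = y + t * (int n - int k)" unfolding q_def by simp
      have "\<not> nu' z < nu z - 1"
      proof
        assume "nu' z < nu z - 1"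
        then have "box_of k n (z, nu z - 1) = b" using inS unfolding in_part_def by simp
        then have "(z, nu z - 1) = q" by (intro box_same_x) (use qbb q_def in auto)
        then show False using nz unfolding q_def by simp
      qed
      then show ?thesis using True lt nz unfolding dec_def by simp
    next
      case False
      have "\<not> nu' z < nu z"
      proof
        assume "nu' z < nu z"
        then have "box_of k n (z, nu z) = b" using inS unfolding in_part_def by simp
        then have "(z, nu z) \<in> box_of k n p" using p(1) box_eq_iff[of p "(z, nu z)"] by simp
        then obtain t where "z = x - t * int k" unfolding box_mem xy by auto
        then show False using False by simp
      qed
      then show ?thesis using False c(3) unfolding dec_def subpart_def by (simp add: not_less order_antisym)
    qed
  qed
  have "nu (x + 1) < nu x"
  proof (cases "(x + 1) mod int k = x mod int k")
    case True
    then have "k = 1" by (rule class_succ)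
    then show ?thesis using cyl_per[OF c(1), of x] kn by simp
  next
    case False
    have "nu' (x + 1) \<le> nu' x" using cyl_mono[OF c(2)] by simp
    then show ?thesis using False unfolding eq dec_def by simp
  qed
  then show ?thesis using eq by blast
qed

lemma dec_inc: "dec (inc nu x) x = nu"
  unfolding dec_def inc_def by auto

lemma inc_dec: "inc (dec nu x) x = nu"
  unfolding dec_def inc_def by auto

lemma inc_cov:
  assumes c: "cylindric k n nu" and d: "nu x < nu (x - 1)"
  shows "cov nu (inc nu x)" "skew_boxes k n (inc nu x) nu = {box_of k n (x, nu x + 1)}"
proof -
  have ci: "cylindric k n (inc nu x)" by (rule inc_cyl[OF assms])
  have "inc nu x (x + 1) < inc nu x x"
  proof (cases "(x + 1) mod int k = x mod int k")
    case True
    then have "k = 1" by (rule class_succ)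
    then show ?thesis using cyl_per[OF ci, of x] kn by simp
  next
    case False
    have "nu (x + 1) \<le> nu x" using cyl_mono[OF c] by simp
    then show ?thesis using False unfolding inc_def by simp
  qed
  note h = dec_cov[OF ci this] dec_skew[OF ci this]
  have "inc nu x x = nu x + 1" unfolding inc_def by simp
  then show "cov nu (inc nu x)" "skew_boxes k n (inc nu x) nu = {box_of k n (x, nu x + 1)}"
    using h unfolding dec_inc by simp_all
qed

lemma cov_inc:
  assumes cv: "cov nu lam"
  shows "\<exists>x. lam = inc nu x \<and> nu x < nu (x - 1)"
proof -
  obtain x where x: "nu = dec lam x" "lam (x + 1) < lam x" using cov_dec[OF cv] by blast
  have c: "cylindric k n nu" using cv unfolding cov_def by auto
  have "nu x < nu (x - 1)"
  proof (cases "(x - 1) mod int k = x mod int k")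
    case True
    then have "k = 1" by (rule class_pred)
    then show ?thesis using cyl_per[OF c, of "x - 1"] kn by simp
  next
    case False
    have cl: "cylindric k n lam" using cv unfolding cov_def by auto
    have "lam x \<le> lam (x - 1)" using cyl_mono[OF cl] by simp
    then show ?thesis using False unfolding x dec_def by simp
  qed
  moreover have "lam = inc nu x" unfolding x inc_dec ..
  ultimately show ?thesis by blast
qed


lemma per_diff: "cylindric k n nu \<Longrightarrow> nu (x mod int k + c) = nu (x + c) + (x div int k) * (int n - int k)"
proof -
  assume c: "cylindric k n nu"
  have "x mod int k + c = x + c - (x div int k) * int k" by (simp add: minus_div_mult_eq_mod[symmetric])
  then show ?thesis by (simp only:) (rule cyl_shift[OF c])
qed

lemma mod_range: "0 \<le> x mod int k" "x mod int k < int k"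
  using Kpos by auto

lemma lower_eq:
  assumes c: "cylindric k n nu"
  shows "{mu. cov mu nu} = dec nu ` {r \<in> {0..<int k}. nu (r + 1) < nu r}"
proof (rule set_eqI, rule iffI)
  fix mu assume "mu \<in> {mu. cov mu nu}"
  then obtain x where x: "mu = dec nu x" "nu (x + 1) < nu x" using cov_dec by blast
  let ?r = "x mod int k"
  have "dec nu x = dec nu ?r" unfolding dec_def by simp
  moreover have "nu (?r + 1) < nu ?r" using per_diff[OF c, of x 1] per_diff[OF c, of x 0] x(2) by simp
  ultimately show "mu \<in> dec nu ` {r \<in> {0..<int k}. nu (r + 1) < nu r}" using x(1) mod_range by auto
next
  fix mu assume "mu \<in> dec nu ` {r \<in> {0..<int k}. nu (r + 1) < nu r}"
  then show "mu \<in> {mu. cov mu nu}" using dec_cov[OF c] by auto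
qed

lemma upper_eq:
  assumes c: "cylindric k n nu"
  shows "{lam. cov nu lam} = inc nu ` {r \<in> {0..<int k}. nu r < nu (r - 1)}"
proof (rule set_eqI, rule iffI)
  fix lam assume "lam \<in> {lam. cov nu lam}"
  then obtain x where x: "lam = inc nu x" "nu x < nu (x - 1)" using cov_inc by blast
  let ?r = "x mod int k"
  have "inc nu x = inc nu ?r" unfolding inc_def by simp
  moreover have "nu ?r < nu (?r - 1)" using per_diff[OF c, of x "-1"] per_diff[OF c, of x 0] x(2) by simp
  ultimately show "lam \<in> inc nu ` {r \<in> {0..<int k}. nu r < nu (r - 1)}" using x(1) mod_range by auto
next
  fix lam assume "lam \<in> inc nu ` {r \<in> {0..<int k}. nu r < nu (r - 1)}"
  then show "lam \<in> {lam. cov nu lam}" using inc_cov[OF c] by auto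
qed

lemma class_inj: "0 \<le> r \<Longrightarrow> r < int k \<Longrightarrow> 0 \<le> r' \<Longrightarrow> r' < int k \<Longrightarrow> r mod int k = r' mod int k \<Longrightarrow> r = r'"
  by simp

lemma dec_inj: "inj_on (dec nu) {r \<in> {0..<int k}. P r}"
proof (rule inj_onI)
  fix r r' assume r: "r \<in> {r \<in> {0..<int k}. P r}" "r' \<in> {r \<in> {0..<int k}. P r}" and e: "dec nu r = dec nu r'"
  have "dec nu r r = dec nu r' r" using e by simp
  then have "r mod int k = r' mod int k" unfolding dec_def by (auto split: if_splits)
  then show "r = r'" using r by auto
qed

lemma inc_inj: "inj_on (inc nu) {r \<in> {0..<int k}. P r}"
proof (rule inj_onI)
  fix r r' assume r: "r \<in> {r \<in> {0..<int k}. P r}" "r' \<in> {r \<in> {0..<int k}. P r}" and e: "inc nu r = inc nu r'"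
  have "inc nu r r = inc nu r' r" using e by simp
  then have "r mod int k = r' mod int k" unfolding inc_def by (auto split: if_splits)
  then show "r = r'" using r by auto
qed

lemma finite_lower: "cylindric k n nu \<Longrightarrow> finite {mu. cov mu nu}"
  unfolding lower_eq by (rule finite_imageI, rule finite_subset[of _ "{0..<int k}"]) auto

lemma finite_upper: "cylindric k n nu \<Longrightarrow> finite {lam. cov nu lam}"
  unfolding upper_eq by (rule finite_imageI, rule finite_subset[of _ "{0..<int k}"]) auto

lemma KL_eq:
  assumes c: "cylindric k n nu"
  shows "card {mu. cov mu nu} = card {lam. cov nu lam}"
proof -
  let ?A = "{r \<in> {0..<int k}. nu (r + 1) < nu r}"
  let ?B = "{r \<in> {0..<int k}. nu r < nu (r - 1)}"
  let ?f = "\<lambda>r. (r + 1) mod int k"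
  have "card {mu. cov mu nu} = card ?A" unfolding lower_eq[OF c] by (rule card_image[OF dec_inj])
  also have "card ?A = card ?B"
  proof -
    have inj: "inj_on ?f ?A"
    proof (rule inj_onI)
      fix r r' assume r: "r \<in> ?A" "r' \<in> ?A" and e: "?f r = ?f r'"
      have "int k dvd (r + 1) - (r' + 1)" using e mod_eq_dvd_iff[of "r+1" "int k" "r'+1"] by simp
      then have "int k dvd r - r'" by simp
      then have "r mod int k = r' mod int k" using mod_eq_dvd_iff[of r "int k" r'] by simp
      then show "r = r'" using r by auto
    qed
    have "?f ` ?A = ?B"
    proof (rule set_eqI, rule iffI)
      fix s assume "s \<in> ?f ` ?A"
      then obtain r where r: "r \<in> ?A" "s = ?f r" by blast
      have "nu s = nu (r + 1) + ((r + 1) div int k) * (int n - int k)"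
        using per_diff[OF c, of "r + 1" 0] r(2) by simp
      moreover have "nu (s - 1) = nu r + ((r + 1) div int k) * (int n - int k)"
        using per_diff[OF c, of "r + 1" "-1"] r(2) by simp
      ultimately show "s \<in> ?B" using r mod_range by auto
    next
      fix s assume s: "s \<in> ?B"
      let ?r = "(s - 1) mod int k"
      have "nu (?r + 1) = nu s + ((s - 1) div int k) * (int n - int k)"
        using per_diff[OF c, of "s - 1" 1] by simp
      moreover have "nu ?r = nu (s - 1) + ((s - 1) div int k) * (int n - int k)"
        using per_diff[OF c, of "s - 1" 0] by simp
      ultimately have rA: "?r \<in> ?A" using s mod_range by auto
      have fr: "?f ?r = s" using s by (simp add: mod_add_left_eq)
      show "s \<in> ?f ` ?A" by (rule rev_image_eqI[where f="?f", OF rA fr[symmetric]])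
    qed
    then show ?thesis using card_image[OF inj] by simp
  qed
  also have "card ?B = card {lam. cov nu lam}" unfolding upper_eq[OF c] by (rule card_image[OF inc_inj, symmetric])
  finally show ?thesis .
qed


lemma KL:
  assumes "cylindric k n nu" "cylindric k n rho"
  shows "card {mu. cov mu nu \<and> cov mu rho} = card {lam. cov nu lam \<and> cov rho lam}"
proof (cases "nu = rho")
  case True
  then show ?thesis using KL_eq[OF assms(1)] by simp
next
  case False
  then show ?thesis by (rule KL_neq)
qed

definition Dop :: "((int \<Rightarrow> int) \<Rightarrow> nat) \<Rightarrow> (int \<Rightarrow> int) \<Rightarrow> nat" where
  "Dop g nu = (\<Sum>mu\<in>{mu. cov mu nu}. g mu)"
definition Uop :: "((int \<Rightarrow> int) \<Rightarrow> nat) \<Rightarrow> (int \<Rightarrow> int) \<Rightarrow> nat" where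
  "Uop g nu = (\<Sum>lam\<in>{lam. cov nu lam}. g lam)"

lemma cov_cyl: "cov a b \<Longrightarrow> cylindric k n a \<and> cylindric k n b"
  unfolding cov_def by simp

lemma commute:
  assumes c: "cylindric k n nu"
  shows "Dop (Uop g) nu = Uop (Dop g) nu"
proof -
  let ?L = "{mu. cov mu nu}"
  let ?U = "{lam. cov nu lam}"
  let ?W = "(\<Union>mu\<in>?L. {lam. cov mu lam}) \<union> (\<Union>lam\<in>?U. {mu. cov mu lam})"
  have fL: "finite ?L" by (rule finite_lower[OF c])
  have fU: "finite ?U" by (rule finite_upper[OF c])
  have fW: "finite ?W"
  proof (rule finite_UnI)
    show "finite (\<Union>mu\<in>?L. {lam. cov mu lam})"
      by (rule finite_UN_I[OF fL]) (use finite_upper cov_cyl in blast)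
    show "finite (\<Union>lam\<in>?U. {mu. cov mu lam})"
      by (rule finite_UN_I[OF fU]) (use finite_lower cov_cyl in blast)
  qed
  have "Dop (Uop g) nu = (\<Sum>mu\<in>?L. \<Sum>lam\<in>{lam. lam \<in> ?W \<and> cov mu lam}. g lam)"
    unfolding Dop_def Uop_def
  proof (rule sum.cong[OF refl])
    fix mu assume "mu \<in> ?L"
    then have "{lam. cov mu lam} = {lam. lam \<in> ?W \<and> cov mu lam}" by blast
    then show "sum g {lam. cov mu lam} = sum g {lam. lam \<in> ?W \<and> cov mu lam}" by (rule arg_cong)
  qed
  also have "\<dots> = (\<Sum>lam\<in>?W. \<Sum>mu\<in>{mu. mu \<in> ?L \<and> cov mu lam}. g lam)"
    by (rule sum.swap_restrict[OF fL fW])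
  also have "\<dots> = (\<Sum>lam\<in>?W. card {mu. cov mu nu \<and> cov mu lam} * g lam)"
    by simp
  also have "\<dots> = (\<Sum>lam\<in>?W. card {rho. cov nu rho \<and> cov lam rho} * g lam)"
  proof (rule sum.cong[OF refl])
    fix lam assume "lam \<in> ?W"
    then have "cylindric k n lam" using cov_cyl by auto
    then show "card {mu. cov mu nu \<and> cov mu lam} * g lam = card {rho. cov nu rho \<and> cov lam rho} * g lam"
      using KL[OF c] by simp
  qed
  also have "\<dots> = (\<Sum>lam\<in>?W. \<Sum>rho\<in>{rho. rho \<in> ?U \<and> cov lam rho}. g lam)"
    by simp
  also have "\<dots> = (\<Sum>rho\<in>?U. \<Sum>lam\<in>{lam. lam \<in> ?W \<and> cov lam rho}. g lam)"
    by (rule sum.swap_restrict[OF fU fW, symmetric])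
  also have "\<dots> = Uop (Dop g) nu"
    unfolding Dop_def Uop_def
  proof (rule sum.cong[OF refl])
    fix rho assume "rho \<in> ?U"
    then have "{mu. cov mu rho} = {lam. lam \<in> ?W \<and> cov lam rho}" by blast
    then show "(\<Sum>lam\<in>{lam. lam \<in> ?W \<and> cov lam rho}. g lam) = sum g {mu. cov mu rho}" by simp
  qed
  finally show ?thesis .
qed

lemma Dop_cong:
  assumes "\<And>x. cylindric k n x \<Longrightarrow> g x = h x" shows "Dop g nu = Dop h nu"
  unfolding Dop_def
proof (rule sum.cong[OF refl])
  fix x assume "x \<in> {mu. cov mu nu}"
  then have "cylindric k n x" using cov_cyl by blast
  then show "g x = h x" by (rule assms)
qed

lemma Uop_cong:
  assumes "\<And>x. cylindric k n x \<Longrightarrow> g x = h x" shows "Uop g nu = Uop h nu"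
  unfolding Uop_def
proof (rule sum.cong[OF refl])
  fix x assume "x \<in> {lam. cov nu lam}"
  then have "cylindric k n x" using cov_cyl by blast
  then show "g x = h x" by (rule assms)
qed

lemma Dpow_cong: "(\<And>x. cylindric k n x \<Longrightarrow> g x = h x) \<Longrightarrow> cylindric k n nu \<Longrightarrow> (Dop ^^ m) g nu = (Dop ^^ m) h nu"
proof (induction m arbitrary: nu)
  case 0 then show ?case by simp
next
  case (Suc m)
  have "Dop ((Dop ^^ m) g) nu = Dop ((Dop ^^ m) h) nu"
    by (rule Dop_cong) (rule Suc.IH[OF Suc.prems(1)])
  then show ?case by simp
qed


lemma pow_commute:
  "cylindric k n nu \<Longrightarrow> (Dop ^^ m) (Uop g) nu = Uop ((Dop ^^ m) g) nu"
proof (induction m arbitrary: nu)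
  case 0 then show ?case by simp
next
  case (Suc m)
  have "(Dop ^^ Suc m) (Uop g) nu = Dop ((Dop ^^ m) (Uop g)) nu" by simp
  also have "\<dots> = Dop (Uop ((Dop ^^ m) g)) nu"
    by (rule Dop_cong) (rule Suc.IH)
  also have "\<dots> = Uop (Dop ((Dop ^^ m) g)) nu" by (rule commute[OF Suc.prems])
  finally show ?case by simp
qed

lemma DU_pow:
  "cylindric k n nu \<Longrightarrow> (Dop ^^ m) (\<lambda>_. 1) nu = (Uop ^^ m) (\<lambda>_. 1) nu"
proof (induction m arbitrary: nu)
  case 0 then show ?case by simp
next
  case (Suc m)
  have "(Dop ^^ Suc m) (\<lambda>_. 1) nu = (Dop ^^ m) (Dop (\<lambda>_. 1)) nu"
    by (simp only: funpow_Suc_right comp_def)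
  also have "\<dots> = (Dop ^^ m) (Uop (\<lambda>_. 1)) nu"
  proof (rule Dpow_cong[OF _ Suc.prems])
    fix x assume "cylindric k n x"
    then show "Dop (\<lambda>_. 1) x = Uop (\<lambda>_. 1) x" unfolding Dop_def Uop_def using KL_eq by simp
  qed
  also have "\<dots> = Uop ((Dop ^^ m) (\<lambda>_. 1)) nu" by (rule pow_commute[OF Suc.prems])
  also have "\<dots> = Uop ((Uop ^^ m) (\<lambda>_. 1)) nu" by (rule Uop_cong) (rule Suc.IH)
  finally show ?case by simp
qed


definition geom :: "(int \<times> int) set \<Rightarrow> (int \<times> int) set \<Rightarrow> bool" where
  "geom b c \<longleftrightarrow> (\<exists>x y1 y2. b = box_of k n (x, y1) \<and> c = box_of k n (x, y2) \<and> y1 < y2) \<or>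
                 (\<exists>x1 x2 y. b = box_of k n (x1, y) \<and> c = box_of k n (x2, y) \<and> x1 < x2)"

lemma semistandard_iff:
  assumes cl: "cylindric k n lam" and cm: "cylindric k n mu"
    and inj: "inj_on R (skew_boxes k n lam mu)"
  shows "semistandard k n lam mu R \<longleftrightarrow>
    (\<forall>b\<in>skew_boxes k n lam mu. \<forall>c\<in>skew_boxes k n lam mu. geom b c \<longrightarrow> R b < R c)"
proof
  assume ss: "semistandard k n lam mu R"
  show "\<forall>b\<in>skew_boxes k n lam mu. \<forall>c\<in>skew_boxes k n lam mu. geom b c \<longrightarrow> R b < R c"
  proof (intro ballI impI)
    fix b c assume b: "b \<in> skew_boxes k n lam mu" and c: "c \<in> skew_boxes k n lam mu" and g: "geom b c"
    from g show "R b < R c" unfolding geom_def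
    proof (elim disjE exE conjE)
      fix x y1 y2 assume e: "b = box_of k n (x, y1)" "c = box_of k n (x, y2)" "y1 < y2"
      have p: "in_part lam (x, y1)" "\<not> in_part mu (x, y1)" "in_part lam (x, y2)" "\<not> in_part mu (x, y2)"
        using skew_mem[OF cl cm] b c e by blast+
      have le: "R b \<le> R c" using ss p e(3) unfolding semistandard_def e(1,2) by blast
      have "b \<noteq> c"
      proof
        assume "b = c"
        then have "(x, y1) = (x, y2)" using e by (intro box_same_x) auto
        then show False using e(3) by simp
      qed
      then have "R b \<noteq> R c" using inj b c unfolding inj_on_def by blast
      then show "R b < R c" using le by simp
    next
      fix x1 x2 y assume e: "b = box_of k n (x1, y)" "c = box_of k n (x2, y)" "x1 < x2"
      have p: "in_part lam (x1, y)" "\<not> in_part mu (x1, y)" "in_part lam (x2, y)" "\<not> in_part mu (x2, y)"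
        using skew_mem[OF cl cm] b c e by blast+
      show "R b < R c" using ss p e(3) unfolding semistandard_def e(1,2) by blast
    qed
  qed
next
  assume h: "\<forall>b\<in>skew_boxes k n lam mu. \<forall>c\<in>skew_boxes k n lam mu. geom b c \<longrightarrow> R b < R c"
  show "semistandard k n lam mu R"
    unfolding semistandard_def
  proof (intro conjI allI impI)
    fix x y1 y2
    assume a: "in_part lam (x, y1) \<and> \<not> in_part mu (x, y1) \<and> in_part lam (x, y2) \<and> \<not> in_part mu (x, y2) \<and> y1 < y2"
    have "box_of k n (x, y1) \<in> skew_boxes k n lam mu" "box_of k n (x, y2) \<in> skew_boxes k n lam mu"
      using skew_mem[OF cl cm] a by blast+
    moreover have "geom (box_of k n (x, y1)) (box_of k n (x, y2))" unfolding geom_def using a by blast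
    ultimately show "R (box_of k n (x, y1)) \<le> R (box_of k n (x, y2))" using h by fastforce
  next
    fix x1 x2 y
    assume a: "in_part lam (x1, y) \<and> \<not> in_part mu (x1, y) \<and> in_part lam (x2, y) \<and> \<not> in_part mu (x2, y) \<and> x1 < x2"
    have "box_of k n (x1, y) \<in> skew_boxes k n lam mu" "box_of k n (x2, y) \<in> skew_boxes k n lam mu"
      using skew_mem[OF cl cm] a by blast+
    moreover have "geom (box_of k n (x1, y)) (box_of k n (x2, y))" unfolding geom_def using a by blast
    ultimately show "R (box_of k n (x1, y)) < R (box_of k n (x2, y))" using h by blast
  qed
qed

lemma std_LE:
  assumes cl: "cylindric k n lam" and cm: "cylindric k n mu"
  shows "standard_tableaux k n lam mu = LE geom (skew_boxes k n lam mu)"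
proof (rule set_eqI)
  fix R
  show "R \<in> standard_tableaux k n lam mu \<longleftrightarrow> R \<in> LE geom (skew_boxes k n lam mu)"
  proof (cases "inj_on R (skew_boxes k n lam mu)")
    case True
    show ?thesis unfolding standard_tableaux_def LE_def using semistandard_iff[OF cl cm True] by blast
  next
    case False
    then have "\<not> (\<exists>N. bij_betw R (skew_boxes k n lam mu) {1..N})" unfolding bij_betw_def by blast
    then show ?thesis unfolding standard_tableaux_def LE_def by blast
  qed
qed

lemma num_LE:
  "cylindric k n lam \<Longrightarrow> cylindric k n mu \<Longrightarrow> num_standard k n lam mu = card (LE geom (skew_boxes k n lam mu))"
  unfolding num_standard_def using std_LE by simp

lemma in_part_mono: "subpart mu lam \<Longrightarrow> in_part mu p \<Longrightarrow> in_part lam p"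
  unfolding subpart_def in_part_def by (metis order_trans)

lemma skew_split:
  assumes cm: "cylindric k n mu" and cs: "cylindric k n sg" and cl: "cylindric k n lam"
    and s1: "subpart mu sg" and s2: "subpart sg lam"
  shows "skew_boxes k n lam mu = skew_boxes k n lam sg \<union> skew_boxes k n sg mu"
    "skew_boxes k n lam sg \<inter> skew_boxes k n sg mu = {}"
proof -
  show "skew_boxes k n lam mu = skew_boxes k n lam sg \<union> skew_boxes k n sg mu"
  proof (rule set_eqI, rule iffI)
    fix b assume "b \<in> skew_boxes k n lam mu"
    then obtain p where p: "b = box_of k n p" "in_part lam p" "\<not> in_part mu p" using skew_elem by blast
    show "b \<in> skew_boxes k n lam sg \<union> skew_boxes k n sg mu"
      using p skew_mem[OF cl cs, of p] skew_mem[OF cs cm, of p] by blast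
  next
    fix b assume "b \<in> skew_boxes k n lam sg \<union> skew_boxes k n sg mu"
    then show "b \<in> skew_boxes k n lam mu"
    proof
      assume "b \<in> skew_boxes k n lam sg"
      then obtain p where p: "b = box_of k n p" "in_part lam p" "\<not> in_part sg p" using skew_elem by blast
      then have "\<not> in_part mu p" using in_part_mono[OF s1] by blast
      then show ?thesis using p skew_mem[OF cl cm, of p] by blast
    next
      assume "b \<in> skew_boxes k n sg mu"
      then obtain p where p: "b = box_of k n p" "in_part sg p" "\<not> in_part mu p" using skew_elem by blast
      then have "in_part lam p" using in_part_mono[OF s2] by blast
      then show ?thesis using p skew_mem[OF cl cm, of p] by blast
    qed
  qed
  show "skew_boxes k n lam sg \<inter> skew_boxes k n sg mu = {}"
  proof (rule ccontr)
    assume "skew_boxes k n lam sg \<inter> skew_boxes k n sg mu \<noteq> {}"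
    then obtain b where b: "b \<in> skew_boxes k n lam sg" "b \<in> skew_boxes k n sg mu" by blast
    then obtain p where p: "b = box_of k n p" "in_part lam p" "\<not> in_part sg p" using skew_elem by blast
    have "in_part sg p" using b(2) p(1) skew_mem[OF cs cm, of p] by blast
    then show False using p by blast
  qed
qed


lemma cov_single:
  assumes "cov a b" shows "\<exists>c. skew_boxes k n b a = {c}"
proof -
  have "card (skew_boxes k n b a) = 1" using assms unfolding cov_def by simp
  then show ?thesis by (simp add: card_1_singleton_iff)
qed

lemma down_box:
  assumes cv: "cov nu' nu" and cm: "cylindric k n mu" and s: "subpart mu nu'"
    and e: "skew_boxes k n nu nu' = {b}"
  shows "b \<in> skew_boxes k n nu mu" "\<forall>c\<in>skew_boxes k n nu mu. \<not> geom b c"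
    "skew_boxes k n nu' mu = skew_boxes k n nu mu - {b}"
proof -
  have c: "cylindric k n nu" "cylindric k n nu'" "subpart nu' nu" using cv unfolding cov_def by auto
  note sp = skew_split[OF cm c(2) c(1) s c(3)]
  show b: "b \<in> skew_boxes k n nu mu" using sp(1) e by blast
  show "skew_boxes k n nu' mu = skew_boxes k n nu mu - {b}" using sp e by blast
  show "\<forall>c\<in>skew_boxes k n nu mu. \<not> geom b c"
  proof (intro ballI notI)
    fix cc assume cc: "cc \<in> skew_boxes k n nu mu" and g: "geom b cc"
    have bin: "b \<in> skew_boxes k n nu nu'" using e by simp
    from g show False unfolding geom_def
    proof (elim disjE exE conjE)
      fix x y1 y2 assume q: "b = box_of k n (x, y1)" "cc = box_of k n (x, y2)" "y1 < y2"
      have p1: "in_part nu (x, y1)" "\<not> in_part nu' (x, y1)" using skew_mem[OF c(1,2)] bin q by blast+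
      have p2: "in_part nu (x, y2)" "\<not> in_part mu (x, y2)" using skew_mem[OF c(1) cm] cc q by blast+
      have "\<not> in_part nu' (x, y2)" using p1(2) q(3) unfolding in_part_def by simp
      then have "cc \<in> skew_boxes k n nu nu'" using skew_mem[OF c(1,2)] p2 q by blast
      then have "cc = b" using e by simp
      then have "(x, y1) = (x, y2)" using q by (intro box_same_x) auto
      then show False using q(3) by simp
    next
      fix x1 x2 y assume q: "b = box_of k n (x1, y)" "cc = box_of k n (x2, y)" "x1 < x2"
      have p1: "in_part nu (x1, y)" "\<not> in_part nu' (x1, y)" using skew_mem[OF c(1,2)] bin q by blast+
      have p2: "in_part nu (x2, y)" "\<not> in_part mu (x2, y)" using skew_mem[OF c(1) cm] cc q by blast+
      have "nu' x2 \<le> nu' x1" using cyl_mono[OF c(2)] q(3) by simp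
      then have "\<not> in_part nu' (x2, y)" using p1(2) unfolding in_part_def by simp
      then have "cc \<in> skew_boxes k n nu nu'" using skew_mem[OF c(1,2)] p2 q by blast
      then have "cc = b" using e by simp
      then have "(x1, y) = (x2, y)" using q by (intro box_same_y) auto
      then show False using q(3) by simp
    qed
  qed
qed

lemma up_box:
  assumes cv: "cov mu nu''" and cl: "cylindric k n nu" and s: "subpart nu'' nu"
    and e: "skew_boxes k n nu'' mu = {b}"
  shows "b \<in> skew_boxes k n nu mu" "\<forall>c\<in>skew_boxes k n nu mu. \<not> geom c b"
    "skew_boxes k n nu nu'' = skew_boxes k n nu mu - {b}"
proof -
  have c: "cylindric k n mu" "cylindric k n nu''" "subpart mu nu''" using cv unfolding cov_def by auto
  note sp = skew_split[OF c(1) c(2) cl c(3) s]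
  show b: "b \<in> skew_boxes k n nu mu" using sp(1) e by blast
  show "skew_boxes k n nu nu'' = skew_boxes k n nu mu - {b}" using sp e by blast
  show "\<forall>c\<in>skew_boxes k n nu mu. \<not> geom c b"
  proof (intro ballI notI)
    fix cc assume cc: "cc \<in> skew_boxes k n nu mu" and g: "geom cc b"
    have bin: "b \<in> skew_boxes k n nu'' mu" using e by simp
    from g show False unfolding geom_def
    proof (elim disjE exE conjE)
      fix x y1 y2 assume q: "cc = box_of k n (x, y1)" "b = box_of k n (x, y2)" "y1 < y2"
      have p1: "in_part nu'' (x, y2)" "\<not> in_part mu (x, y2)" using skew_mem[OF c(2,1)] bin q by blast+
      have p2: "in_part nu (x, y1)" "\<not> in_part mu (x, y1)" using skew_mem[OF cl c(1)] cc q by blast+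
      have "in_part nu'' (x, y1)" using p1(1) q(3) unfolding in_part_def by simp
      then have "cc \<in> skew_boxes k n nu'' mu" using skew_mem[OF c(2,1)] p2 q by blast
      then have "cc = b" using e by simp
      then have "(x, y1) = (x, y2)" using q by (intro box_same_x) auto
      then show False using q(3) by simp
    next
      fix x1 x2 y assume q: "cc = box_of k n (x1, y)" "b = box_of k n (x2, y)" "x1 < x2"
      have p1: "in_part nu'' (x2, y)" "\<not> in_part mu (x2, y)" using skew_mem[OF c(2,1)] bin q by blast+
      have p2: "in_part nu (x1, y)" "\<not> in_part mu (x1, y)" using skew_mem[OF cl c(1)] cc q by blast+
      have "nu'' x2 \<le> nu'' x1" using cyl_mono[OF c(2)] q(3) by simp
      then have "in_part nu'' (x1, y)" using p1(1) unfolding in_part_def by simp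
      then have "cc \<in> skew_boxes k n nu'' mu" using skew_mem[OF c(2,1)] p2 q by blast
      then have "cc = b" using e by simp
      then have "(x1, y) = (x2, y)" using q by (intro box_same_y) auto
      then show False using q(3) by simp
    qed
  qed
qed

lemma max_box_cov:
  assumes cl: "cylindric k n nu" and cm: "cylindric k n mu" and s: "subpart mu nu"
    and b: "b \<in> skew_boxes k n nu mu" and mx: "\<forall>c\<in>skew_boxes k n nu mu. \<not> geom b c"
  shows "\<exists>nu'. cov nu' nu \<and> subpart mu nu' \<and> skew_boxes k n nu nu' = {b}"
proof -
  obtain p where p: "b = box_of k n p" "in_part nu p" "\<not> in_part mu p" using skew_elem[OF b] by blast
  obtain x y where xy: "p = (x, y)" by (cases p)
  have y1: "mu x < y" "y \<le> nu x" using p xy unfolding in_part_def by auto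
  have ynu: "y = nu x"
  proof (rule ccontr)
    assume "y \<noteq> nu x"
    then have "y + 1 \<le> nu x" using y1 by simp
    then have "box_of k n (x, y + 1) \<in> skew_boxes k n nu mu"
      using skew_mem[OF cl cm] y1 unfolding in_part_def by simp
    moreover have "geom b (box_of k n (x, y + 1))" unfolding geom_def p(1) xy by force
    ultimately show False using mx by blast
  qed
  have d: "nu (x + 1) < nu x"
  proof (rule ccontr)
    assume "\<not> nu (x + 1) < nu x"
    then have "y \<le> nu (x + 1)" using ynu by simp
    moreover have "mu (x + 1) \<le> mu x" using cyl_mono[OF cm] by simp
    ultimately have "box_of k n (x + 1, y) \<in> skew_boxes k n nu mu"
      using skew_mem[OF cl cm] y1 unfolding in_part_def by simp
    moreover have "geom b (box_of k n (x + 1, y))" unfolding geom_def p(1) xy by force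
    ultimately show False using mx by blast
  qed
  have "subpart mu (dec nu x)"
    unfolding subpart_def
  proof
    fix z
    show "mu z \<le> dec nu x z"
    proof (cases "z mod int k = x mod int k")
      case True
      obtain t where t: "z = x - t * int k" using same_class[OF True] by blast
      have "mu z = mu x + t * (int n - int k)" "nu z = nu x + t * (int n - int k)"
        using cyl_shift[OF cm] cyl_shift[OF cl] t by auto
      then show ?thesis using True y1 ynu unfolding dec_def by simp
    next
      case False then show ?thesis using s unfolding dec_def subpart_def by simp
    qed
  qed
  moreover have "skew_boxes k n nu (dec nu x) = {b}" using dec_skew[OF cl d] p(1) xy ynu by simp
  ultimately show ?thesis using dec_cov[OF cl d] by blast
qed

lemma min_box_cov:
  assumes cl: "cylindric k n nu" and cm: "cylindric k n mu" and s: "subpart mu nu"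
    and b: "b \<in> skew_boxes k n nu mu" and mn: "\<forall>c\<in>skew_boxes k n nu mu. \<not> geom c b"
  shows "\<exists>nu''. cov mu nu'' \<and> subpart nu'' nu \<and> skew_boxes k n nu'' mu = {b}"
proof -
  obtain p where p: "b = box_of k n p" "in_part nu p" "\<not> in_part mu p" using skew_elem[OF b] by blast
  obtain x y where xy: "p = (x, y)" by (cases p)
  have y1: "mu x < y" "y \<le> nu x" using p xy unfolding in_part_def by auto
  have ymu: "y = mu x + 1"
  proof (rule ccontr)
    assume "y \<noteq> mu x + 1"
    then have "mu x < y - 1" using y1 by simp
    then have "box_of k n (x, y - 1) \<in> skew_boxes k n nu mu"
      using skew_mem[OF cl cm] y1 unfolding in_part_def by simp
    moreover have "geom (box_of k n (x, y - 1)) b" unfolding geom_def p(1) xy by force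
    ultimately show False using mn by blast
  qed
  have d: "mu x < mu (x - 1)"
  proof (rule ccontr)
    assume "\<not> mu x < mu (x - 1)"
    then have "mu (x - 1) < y" using ymu by simp
    moreover have "nu x \<le> nu (x - 1)" using cyl_mono[OF cl] by simp
    ultimately have "box_of k n (x - 1, y) \<in> skew_boxes k n nu mu"
      using skew_mem[OF cl cm] y1 unfolding in_part_def by simp
    moreover have "geom (box_of k n (x - 1, y)) b" unfolding geom_def p(1) xy by force
    ultimately show False using mn by blast
  qed
  have "subpart (inc mu x) nu"
    unfolding subpart_def
  proof
    fix z
    show "inc mu x z \<le> nu z"
    proof (cases "z mod int k = x mod int k")
      case True
      obtain t where t: "z = x - t * int k" using same_class[OF True] by blast
      have "mu z = mu x + t * (int n - int k)" "nu z = nu x + t * (int n - int k)"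
        using cyl_shift[OF cm] cyl_shift[OF cl] t by auto
      then show ?thesis using True y1 ymu unfolding inc_def by simp
    next
      case False then show ?thesis using s unfolding inc_def subpart_def by simp
    qed
  qed
  moreover have "skew_boxes k n (inc mu x) mu = {b}" using inc_cov(2)[OF cm d] p(1) xy ymu by simp
  ultimately show ?thesis using inc_cov(1)[OF cm d] by blast
qed

lemma skew_inj_low:
  assumes "cylindric k n nu" "cylindric k n a" "cylindric k n b" "subpart a nu" "subpart b nu"
    and e: "skew_boxes k n nu a = skew_boxes k n nu b"
  shows "a = b"
proof
  fix x
  have *: "\<not> a x < b x" if "cylindric k n a" "cylindric k n b" "subpart b nu"
    "skew_boxes k n nu a = skew_boxes k n nu b" for a b
  proof
    assume lt: "a x < b x"
    have "in_part nu (x, b x)" using that(3) unfolding subpart_def in_part_def by auto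
    moreover have "\<not> in_part a (x, b x)" using lt unfolding in_part_def by simp
    ultimately have "box_of k n (x, b x) \<in> skew_boxes k n nu a" using skew_mem[OF assms(1) that(1)] by blast
    then have "box_of k n (x, b x) \<in> skew_boxes k n nu b" using that(4) by simp
    then have "\<not> in_part b (x, b x)" using skew_mem[OF assms(1) that(2)] by blast
    then show False unfolding in_part_def by simp
  qed
  show "a x = b x" using *[of a b] *[of b a] assms by fastforce
qed

lemma skew_inj_up:
  assumes "cylindric k n nu" "cylindric k n a" "cylindric k n b" "subpart nu a" "subpart nu b"
    and e: "skew_boxes k n a nu = skew_boxes k n b nu"
  shows "a = b"
proof
  fix x
  have *: "\<not> a x < b x" if "cylindric k n a" "cylindric k n b" "subpart nu a"
    "skew_boxes k n a nu = skew_boxes k n b nu" for a b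
  proof
    assume lt: "a x < b x"
    have "nu x \<le> a x" using that(3) unfolding subpart_def by blast
    then have "\<not> in_part nu (x, b x)" using lt unfolding in_part_def by simp
    moreover have "in_part b (x, b x)" unfolding in_part_def by simp
    ultimately have "box_of k n (x, b x) \<in> skew_boxes k n b nu" using skew_mem[OF that(2) assms(1)] by blast
    then have "box_of k n (x, b x) \<in> skew_boxes k n a nu" using that(4) by simp
    then have "in_part a (x, b x)" using skew_mem[OF that(1) assms(1)] by blast
    then show False using lt unfolding in_part_def by simp
  qed
  show "a x = b x" using *[of a b] *[of b a] assms by fastforce
qed


lemma the_elem_skew: "cov a b \<Longrightarrow> skew_boxes k n b a = {the_elem (skew_boxes k n b a)}"
  using cov_single by fastforce

lemma rec_down:
  assumes cl: "cylindric k n nu" and cm: "cylindric k n mu" and s: "subpart mu nu"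
    and ne: "skew_boxes k n nu mu \<noteq> {}"
  shows "num_standard k n nu mu = (\<Sum>nu'\<in>{nu'. cov nu' nu \<and> subpart mu nu'}. num_standard k n nu' mu)"
proof -
  let ?S = "skew_boxes k n nu mu"
  let ?Mx = "{b\<in>?S. \<forall>c\<in>?S. \<not> geom b c}"
  let ?C = "{nu'. cov nu' nu \<and> subpart mu nu'}"
  define h where "h nu' = the_elem (skew_boxes k n nu nu')" for nu'
  have hS: "skew_boxes k n nu nu' = {h nu'}" if "nu' \<in> ?C" for nu'
    using the_elem_skew that unfolding h_def by blast
  have bij: "bij_betw h ?C ?Mx"
    unfolding bij_betw_def
  proof
    show "inj_on h ?C"
    proof (rule inj_onI)
      fix a b assume a: "a \<in> ?C" and b: "b \<in> ?C" and e: "h a = h b"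
      have "skew_boxes k n nu a = skew_boxes k n nu b" using hS[OF a] hS[OF b] e by simp
      moreover have "cylindric k n a" "cylindric k n b" "subpart a nu" "subpart b nu"
        using a b unfolding cov_def by auto
      ultimately show "a = b" using skew_inj_low cl by blast
    qed
    show "h ` ?C = ?Mx"
    proof
      show "h ` ?C \<subseteq> ?Mx"
      proof
        fix b assume "b \<in> h ` ?C"
        then obtain nu' where nu': "nu' \<in> ?C" "b = h nu'" by blast
        have "cov nu' nu" "subpart mu nu'" using nu' by auto
        note db = down_box[OF this(1) cm this(2) hS[OF nu'(1)]]
        show "b \<in> ?Mx" using db(1,2) nu'(2) by blast
      qed
      show "?Mx \<subseteq> h ` ?C"
      proof
        fix b assume b: "b \<in> ?Mx"
        obtain nu' where nu': "cov nu' nu" "subpart mu nu'" "skew_boxes k n nu nu' = {b}"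
          using max_box_cov[OF cl cm s] b by blast
        then have "nu' \<in> ?C" "h nu' = b" unfolding h_def by auto
        then show "b \<in> h ` ?C" by (intro rev_image_eqI[of nu']) auto
      qed
    qed
  qed
  have "num_standard k n nu mu = card (LE geom ?S)" by (rule num_LE[OF cl cm])
  also have "\<dots> = (\<Sum>b\<in>?Mx. card (LE geom (?S - {b})))" by (rule LE_max[OF finite_skew[OF cl cm] ne])
  also have "\<dots> = (\<Sum>nu'\<in>?C. card (LE geom (?S - {h nu'})))"
    by (rule sum.reindex_bij_betw[OF bij, symmetric])
  also have "\<dots> = (\<Sum>nu'\<in>?C. num_standard k n nu' mu)"
  proof (rule sum.cong[OF refl])
    fix nu' assume nu': "nu' \<in> ?C"
    have c: "cov nu' nu" "subpart mu nu'" using nu' by auto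
    have "skew_boxes k n nu' mu = ?S - {h nu'}" using down_box(3)[OF c(1) cm c(2) hS[OF nu']] .
    moreover have "cylindric k n nu'" using c(1) unfolding cov_def by simp
    ultimately show "card (LE geom (?S - {h nu'})) = num_standard k n nu' mu" using num_LE cm by simp
  qed
  finally show ?thesis .
qed

lemma rec_up:
  assumes cl: "cylindric k n lam" and cm: "cylindric k n nu" and s: "subpart nu lam"
    and ne: "skew_boxes k n lam nu \<noteq> {}"
  shows "num_standard k n lam nu = (\<Sum>nu''\<in>{nu''. cov nu nu'' \<and> subpart nu'' lam}. num_standard k n lam nu'')"
proof -
  let ?S = "skew_boxes k n lam nu"
  let ?Mn = "{b\<in>?S. \<forall>c\<in>?S. \<not> geom c b}"
  let ?C = "{nu''. cov nu nu'' \<and> subpart nu'' lam}"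
  define h where "h nu'' = the_elem (skew_boxes k n nu'' nu)" for nu''
  have hS: "skew_boxes k n nu'' nu = {h nu''}" if "nu'' \<in> ?C" for nu''
    using the_elem_skew that unfolding h_def by blast
  have bij: "bij_betw h ?C ?Mn"
    unfolding bij_betw_def
  proof
    show "inj_on h ?C"
    proof (rule inj_onI)
      fix a b assume a: "a \<in> ?C" and b: "b \<in> ?C" and e: "h a = h b"
      have "skew_boxes k n a nu = skew_boxes k n b nu" using hS[OF a] hS[OF b] e by simp
      moreover have "cylindric k n a" "cylindric k n b" "subpart nu a" "subpart nu b"
        using a b unfolding cov_def by auto
      ultimately show "a = b" using skew_inj_up cm by blast
    qed
    show "h ` ?C = ?Mn"
    proof
      show "h ` ?C \<subseteq> ?Mn"
      proof
        fix b assume "b \<in> h ` ?C"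
        then obtain nu'' where nu'': "nu'' \<in> ?C" "b = h nu''" by blast
        have "cov nu nu''" "subpart nu'' lam" using nu'' by auto
        note db = up_box[OF this(1) cl this(2) hS[OF nu''(1)]]
        show "b \<in> ?Mn" using db(1,2) nu''(2) by blast
      qed
      show "?Mn \<subseteq> h ` ?C"
      proof
        fix b assume b: "b \<in> ?Mn"
        obtain nu'' where nu'': "cov nu nu''" "subpart nu'' lam" "skew_boxes k n nu'' nu = {b}"
          using min_box_cov[OF cl cm s] b by blast
        then have "nu'' \<in> ?C" "h nu'' = b" unfolding h_def by auto
        then show "b \<in> h ` ?C" by (intro rev_image_eqI[of nu'']) auto
      qed
    qed
  qed
  have "num_standard k n lam nu = card (LE geom ?S)" by (rule num_LE[OF cl cm])
  also have "\<dots> = (\<Sum>b\<in>?Mn. card (LE geom (?S - {b})))" by (rule LE_min[OF finite_skew[OF cl cm] ne])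
  also have "\<dots> = (\<Sum>nu''\<in>?C. card (LE geom (?S - {h nu''})))"
    by (rule sum.reindex_bij_betw[OF bij, symmetric])
  also have "\<dots> = (\<Sum>nu''\<in>?C. num_standard k n lam nu'')"
  proof (rule sum.cong[OF refl])
    fix nu'' assume nu'': "nu'' \<in> ?C"
    have c: "cov nu nu''" "subpart nu'' lam" using nu'' by auto
    have "skew_boxes k n lam nu'' = ?S - {h nu''}" using up_box(3)[OF c(1) cl c(2) hS[OF nu'']] .
    moreover have "cylindric k n nu''" using c(1) unfolding cov_def by simp
    ultimately show "card (LE geom (?S - {h nu''})) = num_standard k n lam nu''" using num_LE cl by simp
  qed
  finally show ?thesis .
qed


definition Mset :: "nat \<Rightarrow> (int \<Rightarrow> int) \<Rightarrow> (int \<Rightarrow> int) set" where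
  "Mset m nu = {mu. cylindric k n mu \<and> subpart mu nu \<and> card (skew_boxes k n nu mu) = m}"
definition Uset :: "nat \<Rightarrow> (int \<Rightarrow> int) \<Rightarrow> (int \<Rightarrow> int) set" where
  "Uset m nu = {lam. cylindric k n lam \<and> subpart nu lam \<and> card (skew_boxes k n lam nu) = m}"

lemma term_le:
  assumes "cylindric k n a" "cylindric k n b" "0 \<le> x" "x < int k"
  shows "nat (a x - b x) \<le> card (skew_boxes k n a b)"
proof -
  have "nat (a x - b x) \<le> (\<Sum>x\<in>{0..<int k}. nat (a x - b x))"
    by (rule member_le_sum) (use assms in auto)
  then show ?thesis using card_skew[OF assms(1,2)] by simp
qed

lemma restr_inj: "inj_on (\<lambda>mu x. if x \<in> {0..<int k} then mu x else 0) {mu. cylindric k n mu \<and> P mu}"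
proof (rule inj_onI)
  fix a b assume a: "a \<in> {mu. cylindric k n mu \<and> P mu}" and b: "b \<in> {mu. cylindric k n mu \<and> P mu}"
    and e: "(\<lambda>x. if x \<in> {0..<int k} then a x else 0) = (\<lambda>x. if x \<in> {0..<int k} then b x else 0)"
  show "a = b"
  proof (rule cyl_eqI)
    show "cylindric k n a" "cylindric k n b" using a b by auto
    fix x assume x: "0 \<le> x" "x < int k"
    have "(if x \<in> {0..<int k} then a x else 0) = (if x \<in> {0..<int k} then b x else 0)" using e by metis
    then show "a x = b x" using x by simp
  qed
qed

lemma finite_Mset:
  assumes c: "cylindric k n nu" shows "finite (Mset m nu)"
proof -
  let ?r = "\<lambda>mu x. if x \<in> {0..<int k} then mu x else (0::int)"
  let ?F = "{f. \<forall>x. (x \<in> {0..<int k} \<longrightarrow> f x \<in> (\<Union>y\<in>{0..<int k}. {nu y - int m..nu y})) \<and> (x \<notin> {0..<int k} \<longrightarrow> f x = 0)}"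
  have fF: "finite ?F" by (rule finite_set_of_finite_funs) auto
  have sub: "?r ` Mset m nu \<subseteq> ?F"
  proof
    fix f assume "f \<in> ?r ` Mset m nu"
    then obtain mu where mu: "mu \<in> Mset m nu" "f = ?r mu" by blast
    have cm: "cylindric k n mu" "subpart mu nu" "card (skew_boxes k n nu mu) = m" using mu unfolding Mset_def by auto
    have iv: "\<And>x. x \<in> {0..<int k} \<Longrightarrow> mu x \<in> {nu x - int m..nu x}"
    proof -
      fix x assume "x \<in> {0..<int k}"
      then have "nat (nu x - mu x) \<le> m" using term_le[OF c cm(1), of x] cm(3) by simp
      moreover have "mu x \<le> nu x" using cm(2) unfolding subpart_def by blast
      ultimately show "mu x \<in> {nu x - int m..nu x}" by simp
    qed
    show "f \<in> ?F" unfolding mu(2)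
    proof (simp only: mem_Collect_eq, intro allI conjI impI)
      fix x assume x: "x \<in> {0..<int k}"
      have "mu x \<in> (\<Union>y\<in>{0..<int k}. {nu y - int m..nu y})" by (rule UN_I[OF x]) (rule iv[OF x])
      then show "(if x \<in> {0..<int k} then mu x else 0) \<in> (\<Union>y\<in>{0..<int k}. {nu y - int m..nu y})" using x by simp
    next
      fix x assume "x \<notin> {0..<int k}"
      then show "(if x \<in> {0..<int k} then mu x else 0) = 0" by (rule if_not_P)
    qed
  qed
  have inj: "inj_on ?r (Mset m nu)"
  proof -
    have "Mset m nu = {mu. cylindric k n mu \<and> (subpart mu nu \<and> card (skew_boxes k n nu mu) = m)}"
      unfolding Mset_def by simp
    then show ?thesis using restr_inj by simp
  qed
  show ?thesis by (rule finite_imageD[OF finite_subset[OF sub fF] inj])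
qed

lemma finite_Uset:
  assumes c: "cylindric k n nu" shows "finite (Uset m nu)"
proof -
  let ?r = "\<lambda>mu x. if x \<in> {0..<int k} then mu x else (0::int)"
  let ?F = "{f. \<forall>x. (x \<in> {0..<int k} \<longrightarrow> f x \<in> (\<Union>y\<in>{0..<int k}. {nu y..nu y + int m})) \<and> (x \<notin> {0..<int k} \<longrightarrow> f x = 0)}"
  have fF: "finite ?F" by (rule finite_set_of_finite_funs) auto
  have sub: "?r ` Uset m nu \<subseteq> ?F"
  proof
    fix f assume "f \<in> ?r ` Uset m nu"
    then obtain lam where lam: "lam \<in> Uset m nu" "f = ?r lam" by blast
    have cm: "cylindric k n lam" "subpart nu lam" "card (skew_boxes k n lam nu) = m" using lam unfolding Uset_def by auto
    have iv: "\<And>x. x \<in> {0..<int k} \<Longrightarrow> lam x \<in> {nu x..nu x + int m}"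
    proof -
      fix x assume "x \<in> {0..<int k}"
      then have "nat (lam x - nu x) \<le> m" using term_le[OF cm(1) c, of x] cm(3) by simp
      moreover have "nu x \<le> lam x" using cm(2) unfolding subpart_def by blast
      ultimately show "lam x \<in> {nu x..nu x + int m}" by simp
    qed
    show "f \<in> ?F" unfolding lam(2)
    proof (simp only: mem_Collect_eq, intro allI conjI impI)
      fix x assume x: "x \<in> {0..<int k}"
      have "lam x \<in> (\<Union>y\<in>{0..<int k}. {nu y..nu y + int m})" by (rule UN_I[OF x]) (rule iv[OF x])
      then show "(if x \<in> {0..<int k} then lam x else 0) \<in> (\<Union>y\<in>{0..<int k}. {nu y..nu y + int m})" using x by simp
    next
      fix x assume "x \<notin> {0..<int k}"
      then show "(if x \<in> {0..<int k} then lam x else 0) = 0" by (rule if_not_P)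
    qed
  qed
  have inj: "inj_on ?r (Uset m nu)"
  proof -
    have "Uset m nu = {mu. cylindric k n mu \<and> (subpart nu mu \<and> card (skew_boxes k n mu nu) = m)}"
      unfolding Uset_def by simp
    then show ?thesis using restr_inj by simp
  qed
  show ?thesis by (rule finite_imageD[OF finite_subset[OF sub fF] inj])
qed

lemma Mset0: "cylindric k n nu \<Longrightarrow> Mset 0 nu = {nu}"
  unfolding Mset_def using card0 card_self by (auto simp: subpart_def)

lemma Uset0: "cylindric k n nu \<Longrightarrow> Uset 0 nu = {nu}"
  unfolding Uset_def using card0 card_self by (auto simp: subpart_def)

lemma num_self: "num_standard k n nu nu = 1"
proof -
  have "standard_tableaux k n nu nu = {\<lambda>_. 0}"
  proof -
    have e: "skew_boxes k n nu nu = {}" unfolding skew_boxes_def by auto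
    have "bij_betw (\<lambda>_. 0::nat) {} {1..0}" by (simp add: bij_betw_def)
    then show ?thesis unfolding standard_tableaux_def e semistandard_def
      by (auto simp: bij_betw_def in_part_def)
  qed
  then show ?thesis unfolding num_standard_def by simp
qed

lemma Mset_step:
  assumes cv: "cov nu' nu"
  shows "{mu. mu \<in> Mset (Suc m) nu \<and> subpart mu nu'} = Mset m nu'"
proof -
  have c: "cylindric k n nu'" "cylindric k n nu" "subpart nu' nu" "card (skew_boxes k n nu nu') = 1"
    using cv unfolding cov_def by auto
  show ?thesis
  proof (rule set_eqI, rule iffI)
    fix mu assume "mu \<in> {mu. mu \<in> Mset (Suc m) nu \<and> subpart mu nu'}"
    then have mu: "cylindric k n mu" "subpart mu nu" "card (skew_boxes k n nu mu) = Suc m" "subpart mu nu'"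
      unfolding Mset_def by auto
    have "card (skew_boxes k n nu mu) = card (skew_boxes k n nu nu') + card (skew_boxes k n nu' mu)"
      by (rule card_add[OF mu(1) c(1) c(2) mu(4) c(3)])
    then show "mu \<in> Mset m nu'" unfolding Mset_def using mu c by simp
  next
    fix mu assume "mu \<in> Mset m nu'"
    then have mu: "cylindric k n mu" "subpart mu nu'" "card (skew_boxes k n nu' mu) = m"
      unfolding Mset_def by auto
    have "card (skew_boxes k n nu mu) = card (skew_boxes k n nu nu') + card (skew_boxes k n nu' mu)"
      by (rule card_add[OF mu(1) c(1) c(2) mu(2) c(3)])
    moreover have "subpart mu nu" using mu(2) c(3) unfolding subpart_def by (metis order_trans)
    ultimately show "mu \<in> {mu. mu \<in> Mset (Suc m) nu \<and> subpart mu nu'}" unfolding Mset_def using mu c by simp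
  qed
qed

lemma Uset_step:
  assumes cv: "cov nu nu''"
  shows "{lam. lam \<in> Uset (Suc m) nu \<and> subpart nu'' lam} = Uset m nu''"
proof -
  have c: "cylindric k n nu" "cylindric k n nu''" "subpart nu nu''" "card (skew_boxes k n nu'' nu) = 1"
    using cv unfolding cov_def by auto
  show ?thesis
  proof (rule set_eqI, rule iffI)
    fix lam assume "lam \<in> {lam. lam \<in> Uset (Suc m) nu \<and> subpart nu'' lam}"
    then have lam: "cylindric k n lam" "subpart nu lam" "card (skew_boxes k n lam nu) = Suc m" "subpart nu'' lam"
      unfolding Uset_def by auto
    have "card (skew_boxes k n lam nu) = card (skew_boxes k n lam nu'') + card (skew_boxes k n nu'' nu)"
      by (rule card_add[OF c(1) c(2) lam(1) c(3) lam(4)])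
    then show "lam \<in> Uset m nu''" unfolding Uset_def using lam c by simp
  next
    fix lam assume "lam \<in> Uset m nu''"
    then have lam: "cylindric k n lam" "subpart nu'' lam" "card (skew_boxes k n lam nu'') = m"
      unfolding Uset_def by auto
    have "card (skew_boxes k n lam nu) = card (skew_boxes k n lam nu'') + card (skew_boxes k n nu'' nu)"
      by (rule card_add[OF c(1) c(2) lam(1) c(3) lam(2)])
    moreover have "subpart nu lam" using lam(2) c(3) unfolding subpart_def by (metis order_trans)
    ultimately show "lam \<in> {lam. lam \<in> Uset (Suc m) nu \<and> subpart nu'' lam}" unfolding Uset_def using lam c by simp
  qed
qed


lemma Dn_pow:
  "cylindric k n nu \<Longrightarrow> (\<Sum>mu\<in>Mset m nu. num_standard k n nu mu) = (Dop ^^ m) (\<lambda>_. 1) nu"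
proof (induction m arbitrary: nu)
  case 0 then show ?case using Mset0 num_self by simp
next
  case (Suc m)
  note c = Suc.prems
  have "(\<Sum>mu\<in>Mset (Suc m) nu. num_standard k n nu mu)
      = (\<Sum>mu\<in>Mset (Suc m) nu. \<Sum>nu'\<in>{nu'. nu' \<in> {nu'. cov nu' nu} \<and> subpart mu nu'}. num_standard k n nu' mu)"
  proof (rule sum.cong[OF refl])
    fix mu assume "mu \<in> Mset (Suc m) nu"
    then have mu: "cylindric k n mu" "subpart mu nu" "card (skew_boxes k n nu mu) = Suc m"
      unfolding Mset_def by auto
    have "skew_boxes k n nu mu \<noteq> {}" using mu(3) by auto
    then show "num_standard k n nu mu = (\<Sum>nu'\<in>{nu'. nu' \<in> {nu'. cov nu' nu} \<and> subpart mu nu'}. num_standard k n nu' mu)"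
      using rec_down[OF c mu(1,2)] by simp
  qed
  also have "\<dots> = (\<Sum>nu'\<in>{nu'. cov nu' nu}. \<Sum>mu\<in>{mu. mu \<in> Mset (Suc m) nu \<and> subpart mu nu'}. num_standard k n nu' mu)"
    by (rule sum.swap_restrict[OF finite_Mset[OF c] finite_lower[OF c]])
  also have "\<dots> = (\<Sum>nu'\<in>{nu'. cov nu' nu}. (Dop ^^ m) (\<lambda>_. 1) nu')"
  proof (rule sum.cong[OF refl])
    fix nu' assume "nu' \<in> {nu'. cov nu' nu}"
    then have cv: "cov nu' nu" by simp
    then have "cylindric k n nu'" unfolding cov_def by simp
    then show "(\<Sum>mu\<in>{mu. mu \<in> Mset (Suc m) nu \<and> subpart mu nu'}. num_standard k n nu' mu) = (Dop ^^ m) (\<lambda>_. 1) nu'"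
      unfolding Mset_step[OF cv] by (rule Suc.IH)
  qed
  also have "\<dots> = (Dop ^^ Suc m) (\<lambda>_. 1) nu" by (simp add: Dop_def)
  finally show ?case .
qed

lemma Up_pow:
  "cylindric k n nu \<Longrightarrow> (\<Sum>lam\<in>Uset m nu. num_standard k n lam nu) = (Uop ^^ m) (\<lambda>_. 1) nu"
proof (induction m arbitrary: nu)
  case 0 then show ?case using Uset0 num_self by simp
next
  case (Suc m)
  note c = Suc.prems
  have "(\<Sum>lam\<in>Uset (Suc m) nu. num_standard k n lam nu)
      = (\<Sum>lam\<in>Uset (Suc m) nu. \<Sum>nu''\<in>{nu''. nu'' \<in> {nu''. cov nu nu''} \<and> subpart nu'' lam}. num_standard k n lam nu'')"
  proof (rule sum.cong[OF refl])
    fix lam assume "lam \<in> Uset (Suc m) nu"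
    then have lam: "cylindric k n lam" "subpart nu lam" "card (skew_boxes k n lam nu) = Suc m"
      unfolding Uset_def by auto
    have "skew_boxes k n lam nu \<noteq> {}" using lam(3) by auto
    then show "num_standard k n lam nu = (\<Sum>nu''\<in>{nu''. nu'' \<in> {nu''. cov nu nu''} \<and> subpart nu'' lam}. num_standard k n lam nu'')"
      using rec_up[OF lam(1) c lam(2)] by simp
  qed
  also have "\<dots> = (\<Sum>nu''\<in>{nu''. cov nu nu''}. \<Sum>lam\<in>{lam. lam \<in> Uset (Suc m) nu \<and> subpart nu'' lam}. num_standard k n lam nu'')"
    by (rule sum.swap_restrict[OF finite_Uset[OF c] finite_upper[OF c]])
  also have "\<dots> = (\<Sum>nu''\<in>{nu''. cov nu nu''}. (Uop ^^ m) (\<lambda>_. 1) nu'')"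
  proof (rule sum.cong[OF refl])
    fix nu'' assume "nu'' \<in> {nu''. cov nu nu''}"
    then have cv: "cov nu nu''" by simp
    then have "cylindric k n nu''" unfolding cov_def by simp
    then show "(\<Sum>lam\<in>{lam. lam \<in> Uset (Suc m) nu \<and> subpart nu'' lam}. num_standard k n lam nu'') = (Uop ^^ m) (\<lambda>_. 1) nu''"
      unfolding Uset_step[OF cv] by (rule Suc.IH)
  qed
  also have "\<dots> = (Uop ^^ Suc m) (\<lambda>_. 1) nu" by (simp add: Uop_def)
  finally show ?case .
qed

end

theorem mainTheorem7:
  fixes k n m :: nat and alpha :: "int \<Rightarrow> int"
  assumes "1 \<le> k" and "k < n"
    and "cylindric k n alpha"
  shows "(\<Sum>mu \<in> {mu. cylindric k n mu \<and> subpart mu alpha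
                      \<and> card (skew_boxes k n alpha mu) = m}.
             num_standard k n alpha mu)
       = (\<Sum>lam \<in> {lam. cylindric k n lam \<and> subpart alpha lam
                      \<and> card (skew_boxes k n lam alpha) = m}.
             num_standard k n lam alpha)"
proof -
  interpret cyl k n using assms(1,2) by unfold_locales
  have "(\<Sum>mu\<in>Mset m alpha. num_standard k n alpha mu) = (\<Sum>lam\<in>Uset m alpha. num_standard k n lam alpha)"
    using Dn_pow[OF assms(3)] Up_pow[OF assms(3)] DU_pow[OF assms(3)] by simp
  then show ?thesis unfolding Mset_def Uset_def .
qed

end
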